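(* Let $f:\mathbb{R}^n\to\{\pm1\}$ be a Borel-measurable function. For each $\rho\in[0,1]$ and each $d\in\mathbb{N}$, there is a polynomial $p:\mathbb{R}^n\to\mathbb{R}$ of degree at most $d$ such that $$\mathbb{E}_{x\sim\mathcal{N}(0,I_n)}\big[|f(x)-p(x)|\big]\le 2\,\mathrm{GNS}_{1-\rho}(f)+\rho^{d+1}.$$
   Context: For $\delta\in[0,1]$, the Gaussian noise sensitivity of $f:\mathbb{R}^n\to\{\pm1\}$ is $\mathrm{GNS}_\delta(f)=\mathbb{P}[f(X)\ne f(Y)]$, where $(X,Y)$ is a pair of $(1-\delta)$-correlated standard Gaussians, i.e. $(X,Y)\sim\mathcal{N}\!\left(0,\begin{pmatrix}I_n&(1-\delta)I_n\\(1-\delta)I_n&I_n\end{pmatrix}\right)$. The convention $0^{d+1}=0$ is used. *)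

theory Defs
  imports "HOL-Analysis.Analysis" "HOL-Probability.Probability"
begin

definition std_gaussian :: "(real ^ 'n) measure" where
  "std_gaussian = density lborel (\<lambda>x. ennreal (\<Prod>i\<in>UNIV. std_normal_density (x $ i)))"

text \<open>Law of a pair (X,Y) of r-correlated standard Gaussians on R^n (0 <= r <= 1):
  realised as X and Y = r X + sqrt(1 - r^2) Z with X, Z independent standard Gaussians;
  its covariance is [[I, r I],[r I, I]].\<close>
definition corr_gaussian_pair :: "real \<Rightarrow> ((real ^ 'n) \<times> (real ^ 'n)) measure" where
  "corr_gaussian_pair r =
     distr (std_gaussian \<Otimes>\<^sub>M std_gaussian) (borel \<Otimes>\<^sub>M borel)
       (\<lambda>(x, z). (x, r *\<^sub>R x + sqrt (1 - r\<^sup>2) *\<^sub>R z))"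

definition GNS :: "real \<Rightarrow> (real ^ 'n \<Rightarrow> real) \<Rightarrow> real" where
  "GNS \<delta> f = measure (corr_gaussian_pair (1 - \<delta>)) {(x, y). f x \<noteq> f y}"

definition poly_deg_le :: "nat \<Rightarrow> (real ^ 'n \<Rightarrow> real) \<Rightarrow> bool" where
  "poly_deg_le d p \<longleftrightarrow>
     (\<exists>A c. finite (A :: ('n \<Rightarrow> nat) set) \<and> (\<forall>\<alpha>\<in>A. (\<Sum>i\<in>UNIV. \<alpha> i) \<le> d) \<and>
        (\<forall>x. p x = (\<Sum>\<alpha>\<in>A. c \<alpha> * (\<Prod>i\<in>UNIV. (x $ i) ^ (\<alpha> i)))))"

end

theory Submission
  imports Defs "HOL-Computational_Algebra.Polynomial"
begin

definition gmom :: "nat \<Rightarrow> real" where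
  "gmom j = (if even j then fact j / (2 ^ (j div 2) * fact (j div 2)) else 0)"

lemma gmom_0 [simp]: "gmom 0 = 1" and gmom_1 [simp]: "gmom (Suc 0) = 0"
  by (auto simp: gmom_def)

lemma gmom_SucSuc: "gmom (Suc (Suc j)) = real (Suc j) * gmom j"
proof (cases "even j")
  case True
  then obtain k where k: "j = 2 * k" by blast
  have "Suc (Suc j) = 2 * Suc k" using k by simp
  have f1: "fact (2 * Suc k) = real (2*k+2) * real (2*k+1) * (fact (2*k) :: real)"
    by (simp add: fact_Suc algebra_simps)
  have f2: "fact (Suc k) = real (k+1) * (fact k :: real)" by simp
  have "gmom (Suc (Suc j)) = fact (2 * Suc k) / (2 ^ Suc k * fact (Suc k))"
    using \<open>Suc (Suc j) = 2 * Suc k\<close> by (simp add: gmom_def)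
  also have "\<dots> = real (Suc j) * (fact (2*k) / (2^k * fact k))"
  proof -
    have d: "(2::real)^Suc k * (real (k+1) * fact k) = real(2*k+2) * (2^k * fact k)" by (simp add: algebra_simps)
    have "real (2*k+2) * real (2*k+1) * (fact (2*k) :: real) / (2^Suc k * (real (k+1) * fact k))
       = real (2*k+2) * (real (2*k+1) * fact (2*k)) / (real(2*k+2) * (2^k * fact k))"
      unfolding d by (simp add: algebra_simps)
    also have "\<dots> = real (2*k+1) * fact (2*k) / (2^k * fact k)"
      by (rule mult_divide_mult_cancel_left) simp
    finally show ?thesis unfolding f1 f2 using k by simp
  qed
  finally show ?thesis using k by (simp add: gmom_def)
qed (simp add: gmom_def)

definition G :: "real poly \<Rightarrow> real" where
  "G p = (\<Sum>i\<le>degree p. coeff p i * gmom i)"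

lemma G_bound: assumes "degree p \<le> D" shows "G p = (\<Sum>i\<le>D. coeff p i * gmom i)"
proof -
  have "(\<Sum>i\<le>D. coeff p i * gmom i) = (\<Sum>i\<le>degree p. coeff p i * gmom i)"
    by (rule sum.mono_neutral_right) (use assms in \<open>auto simp: coeff_eq_0\<close>)
  then show ?thesis by (simp add: G_def)
qed

lemma G_add: "G (p + q) = G p + G q"
proof -
  let ?D = "max (degree p) (degree q)"
  have "degree (p + q) \<le> ?D" by (rule degree_add_le_max)
  then show ?thesis by (simp add: G_bound[of _ ?D] sum.distrib algebra_simps)
qed

lemma G_smult: "G (smult a p) = a * G p"
  by (simp add: G_bound[of "smult a p" "degree p"] G_def sum_distrib_left algebra_simps)

lemma G_diff: "G (p - q) = G p - G q"
  using G_add[of "p - q" q] by simp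

lemma G_const: "G [:c:] = c"
  by (simp add: G_def)

lemma G_1: "G 1 = 1"
  by (simp add: G_def)

lemma G_stein: "G (pCons 0 p) = G (pderiv p)"
proof -
  let ?D = "degree p"
  have "G (pCons 0 p) = (\<Sum>i\<le>Suc ?D. coeff (pCons 0 p) i * gmom i)"
    by (rule G_bound) (simp add: degree_pCons_le)
  also have "\<dots> = (\<Sum>i\<le>?D. coeff p i * gmom (Suc i))"
    by (subst sum.atMost_Suc_shift) simp
  finally have 1: "G (pCons 0 p) = (\<Sum>i\<le>?D. coeff p i * gmom (Suc i))" .
  have "G (pderiv p) = (\<Sum>i\<le>?D. coeff (pderiv p) i * gmom i)"
    by (rule G_bound) (simp add: degree_pderiv)
  also have "\<dots> = (\<Sum>i\<le>?D. real (Suc i) * coeff p (Suc i) * gmom i)"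
    by (simp add: coeff_pderiv)
  finally have 2: "G (pderiv p) = (\<Sum>i\<le>?D. real (Suc i) * coeff p (Suc i) * gmom i)" .
  have "(\<Sum>i\<le>Suc ?D. coeff p i * gmom (Suc i)) = (\<Sum>i\<le>?D. coeff p (Suc i) * gmom (Suc (Suc i))) + coeff p 0 * gmom 1"
    by (subst sum.atMost_Suc_shift) simp
  then have "(\<Sum>i\<le>?D. coeff p i * gmom (Suc i)) = (\<Sum>i\<le>?D. real (Suc i) * coeff p (Suc i) * gmom i)"
    by (simp add: gmom_SucSuc coeff_eq_0 algebra_simps)
  with 1 2 show ?thesis by simp
qed

fun He :: "nat \<Rightarrow> real poly" where
  "He 0 = 1"
| "He (Suc 0) = [:0, 1:]"
| "He (Suc (Suc k)) = pCons 0 (He (Suc k)) - smult (real (Suc k)) (He k)"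

lemma smult_Suc_real: "smult (real (Suc n)) X = X + smult (real n) X"
  by (simp add: smult_add_left)

lemma pderiv_He_aux: "pderiv (He (Suc k)) = smult (real (Suc k)) (He k) \<and>
   pderiv (He (Suc (Suc k))) = smult (real (Suc (Suc k))) (He (Suc k))"
proof (induction k)
  case 0
  then show ?case by (simp add: pderiv_pCons pderiv_diff pderiv_smult)
next
  case (Suc k)
  then have a: "pderiv (He (Suc k)) = smult (real (Suc k)) (He k)"
    and b: "pderiv (He (Suc (Suc k))) = smult (real (Suc (Suc k))) (He (Suc k))" by auto
  have "pderiv (He (Suc (Suc (Suc k)))) = pderiv (pCons 0 (He (Suc (Suc k)))) - smult (real (Suc (Suc k))) (pderiv (He (Suc k)))"
    by (simp only: He.simps pderiv_diff pderiv_smult)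
  also have "\<dots> = He (Suc (Suc k)) + pCons 0 (smult (real (Suc (Suc k))) (He (Suc k))) - smult (real (Suc (Suc k))) (smult (real (Suc k)) (He k))"
    by (simp only: pderiv_pCons a b)
  also have "\<dots> = He (Suc (Suc k)) + smult (real (Suc (Suc k))) (pCons 0 (He (Suc k)) - smult (real (Suc k)) (He k))"
    by (simp add: smult_diff_right)
  also have "\<dots> = He (Suc (Suc k)) + smult (real (Suc (Suc k))) (He (Suc (Suc k)))"
    by simp
  also have "\<dots> = smult (real (Suc (Suc (Suc k)))) (He (Suc (Suc k)))"
    by (simp only: smult_Suc_real[of "Suc (Suc k)"])
  finally show ?case using b by simp
qed

lemma pderiv_He: "pderiv (He (Suc k)) = smult (real (Suc k)) (He k)"
  using pderiv_He_aux by blast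

lemma He_rec: "He (Suc k) = pCons 0 (He k) - pderiv (He k)"
  by (cases k) (simp_all add: pderiv_He)


lemma G_0 [simp]: "G 0 = 0" by (simp add: G_def)

lemma G_lin: "G [:a, b:] = a"
proof -
  have "G [:a, b:] = (\<Sum>i\<le>1. coeff [:a, b:] i * gmom i)"
    by (rule G_bound) simp
  then show ?thesis by simp
qed

lemma pCons0_mult: "pCons 0 a * q = pCons 0 (a * q)"
  by simp

lemma G_He_mult: "G (He k * q) = G ((pderiv ^^ k) q)"
proof (induction k arbitrary: q)
  case 0
  then show ?case by simp
next
  case (Suc k)
  have "He (Suc k) * q = pCons 0 (He k * q) - pderiv (He k) * q"
    by (simp add: He_rec algebra_simps)
  then have "G (He (Suc k) * q) = G (pderiv (He k * q)) - G (pderiv (He k) * q)"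
    by (simp add: G_diff G_stein)
  also have "\<dots> = G (He k * pderiv q)"
    by (simp add: pderiv_mult G_add algebra_simps)
  also have "\<dots> = G ((pderiv ^^ Suc k) q)"
    using Suc.IH[of "pderiv q"] by (simp only: funpow_Suc_right comp_apply)
  finally show ?case .
qed

lemma pderiv_pow_He:
  "(pderiv ^^ m) (He j) = (if m \<le> j then smult (fact j / fact (j - m)) (He (j - m)) else 0)"
proof (induction m)
  case 0
  then show ?case by simp
next
  case (Suc m)
  show ?case
  proof (cases "Suc m \<le> j")
    case True
    then obtain i where i: "j - m = Suc i" by (metis Suc_diff_le diff_Suc_Suc diff_zero le_SucE le_imp_less_Suc less_imp_le_nat)
    have ij: "j - Suc m = i" using i by simp
    have "(pderiv ^^ Suc m) (He j) = pderiv (smult (fact j / fact (j - m)) (He (Suc i)))"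
      using Suc True i by simp
    also have "\<dots> = smult (fact j / fact (j - m) * real (Suc i)) (He i)"
      by (simp add: pderiv_smult pderiv_He)
    also have "fact j / fact (j - m) * real (Suc i) = (fact j / fact i :: real)"
    proof -
      have "fact (j - m) = real (Suc i) * (fact i :: real)" using i by (simp del: of_nat_Suc)
      moreover have "\<And>c f a::real. c \<noteq> 0 \<Longrightarrow> a / (c*f) * c = a / f"
        by (case_tac "f = 0") (simp_all add: field_simps)
      ultimately show ?thesis by (simp del: of_nat_Suc)
    qed
    finally show ?thesis using True ij by simp
  next
    case False
    then show ?thesis using Suc by (cases "m = j") (auto simp: pderiv_smult)
  qed
qed

lemma pderiv_pow_1: "(pderiv ^^ Suc m) (1 :: real poly) = 0"
  by (induction m) auto

lemma G_He: "G (He m) = (if m = 0 then 1 else 0)"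
proof (cases m)
  case 0
  then show ?thesis by (simp add: G_1)
next
  case (Suc k)
  have "G (He m) = G (He m * 1)" by simp
  also have "\<dots> = 0" unfolding G_He_mult Suc pderiv_pow_1 by (simp add: G_def)
  finally show ?thesis using Suc by simp
qed

lemma G_He_He: "G (He j * He k) = (if j = k then fact k else 0)"
proof -
  have "G (He j * He k) = G (He k * He j)" by (simp add: mult.commute)
  also have "\<dots> = G ((pderiv ^^ k) (He j))" by (rule G_He_mult)
  also have "\<dots> = (if j = k then fact k else 0)"
    by (auto simp: pderiv_pow_He G_smult G_He G_const)
  finally show ?thesis .
qed

lemma G_He_compose:
  fixes \<rho> s x :: real
  assumes s2: "s^2 = 1 - \<rho>^2"
  shows "G (pcompose (He k) [:\<rho> * x, s:]) = \<rho> ^ k * poly (He k) x"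
proof -
  let ?q = "[:\<rho> * x, s:]"
  define u where "u k = G (pcompose (He k) ?q)" for k
  have step: "u (Suc (Suc k)) = \<rho> * x * u (Suc k) - \<rho>^2 * real (Suc k) * u k" for k
  proof -
    have pq: "pderiv ?q = [:s:]" by (simp add: pderiv_pCons)
    have "pcompose (He (Suc (Suc k))) ?q = ?q * pcompose (He (Suc k)) ?q - smult (real (Suc k)) (pcompose (He k) ?q)"
      by (simp add: pcompose_diff pcompose_smult pcompose_pCons)
    also have "?q * pcompose (He (Suc k)) ?q = smult (\<rho> * x) (pcompose (He (Suc k)) ?q) + pCons 0 (smult s (pcompose (He (Suc k)) ?q))"
      by simp
    finally have e: "pcompose (He (Suc (Suc k))) ?q = smult (\<rho> * x) (pcompose (He (Suc k)) ?q) + pCons 0 (smult s (pcompose (He (Suc k)) ?q)) - smult (real (Suc k)) (pcompose (He k) ?q)" .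
    have "G (pCons 0 (smult s (pcompose (He (Suc k)) ?q))) = s * G (pderiv (pcompose (He (Suc k)) ?q))"
      by (simp add: G_stein pderiv_smult G_smult)
    also have "pderiv (pcompose (He (Suc k)) ?q) = smult (s * real (Suc k)) (pcompose (He k) ?q)"
      by (simp add: pderiv_pcompose pderiv_He pq pcompose_smult)
    finally have "G (pCons 0 (smult s (pcompose (He (Suc k)) ?q))) = s^2 * real (Suc k) * u k"
      by (simp add: G_smult u_def power2_eq_square)
    then show ?thesis
      unfolding u_def e by (simp add: G_add G_diff G_smult s2 u_def algebra_simps)
  qed
  have "u k = \<rho> ^ k * poly (He k) x \<and> u (Suc k) = \<rho> ^ Suc k * poly (He (Suc k)) x"
  proof (induction k)
    case 0
    show ?case by (simp add: u_def G_1 pcompose_1 pcompose_pCons G_lin)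
  next
    case (Suc k)
    then show ?case
      by (simp add: step) (simp add: algebra_simps power2_eq_square)
  qed
  then show ?thesis by (simp add: u_def)
qed


definition N1 :: "real measure" where
  "N1 = density lborel std_normal_density"

lemma prob_space_N1: "prob_space N1"
  unfolding N1_def by (rule prob_space_normal_density) simp

lemma sets_N1 [simp, measurable_cong]: "sets N1 = sets borel"
  and space_N1 [simp]: "space N1 = UNIV"
  by (simp_all add: N1_def)

lemma integrable_N1_iff:
  assumes [measurable]: "f \<in> borel_measurable borel"
  shows "integrable N1 f \<longleftrightarrow> integrable lborel (\<lambda>x. std_normal_density x * f x)"
  unfolding N1_def by (subst integrable_density) auto

lemma integral_N1:
  assumes [measurable]: "f \<in> borel_measurable borel"
  shows "integral\<^sup>L N1 f = (\<integral>x. std_normal_density x * f x \<partial>lborel)"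
  unfolding N1_def by (subst integral_density) auto

lemma integral_std_normal_moment: "(\<integral>x. std_normal_density x * x ^ i \<partial>lborel) = gmom i"
proof (cases "even i")
  case True
  then obtain k where "i = 2 * k" by blast
  then show ?thesis using integral_std_normal_moment_even[of k] by (simp add: gmom_def)
next
  case False
  then obtain k where "i = 2 * k + 1" using oddE by blast
  then show ?thesis using integral_std_normal_moment_odd[of k] by (simp add: gmom_def)
qed

lemma poly_sum_bound:
  assumes "degree (p::real poly) \<le> D" shows "poly p x = (\<Sum>i\<le>D. coeff p i * x ^ i)"
proof -
  have "(\<Sum>i\<le>D. coeff p i * x ^ i) = (\<Sum>i\<le>degree p. coeff p i * x ^ i)"
    by (rule sum.mono_neutral_right) (use assms in \<open>auto simp: coeff_eq_0\<close>)
  then show ?thesis by (simp only: poly_altdef)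
qed

lemma poly_measurable [measurable]: "(\<lambda>t. poly (p::real poly) t) \<in> borel_measurable borel"
  by (intro borel_measurable_continuous_onI) (auto intro: continuous_intros)

lemma integrable_N1_poly: "integrable N1 (\<lambda>t. poly p t)"
proof -
  have "integrable lborel (\<lambda>x. \<Sum>i\<le>degree p. coeff p i * (std_normal_density x * x ^ i))"
    by (rule Bochner_Integration.integrable_sum, rule integrable_mult_right, rule integrable_std_normal_moment)
  then have "integrable lborel (\<lambda>x. std_normal_density x * poly p x)"
    by (simp add: poly_altdef sum_distrib_left algebra_simps)
  then show ?thesis by (subst integrable_N1_iff) auto
qed

lemma integral_N1_poly: "(\<integral>t. poly p t \<partial>N1) = G p"
proof -
  have "(\<integral>t. poly p t \<partial>N1) = (\<integral>x. (\<Sum>i\<le>degree p. coeff p i * (std_normal_density x * x ^ i)) \<partial>lborel)"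
    by (subst integral_N1) (auto simp: poly_altdef sum_distrib_left algebra_simps)
  also have "\<dots> = (\<Sum>i\<le>degree p. coeff p i * gmom i)"
    by (subst Bochner_Integration.integral_sum) (auto intro!: integrable_mult_right integrable_std_normal_moment sum.cong
        simp: integral_std_normal_moment)
  finally show ?thesis by (simp add: G_def)
qed

lemma distr_N1_affine:
  assumes "0 < s"
  shows "distr N1 lborel (\<lambda>t. a + s * t) = density lborel (normal_density a s)"
proof -
  interpret prob_space N1 by (rule prob_space_N1)
  have d: "distributed N1 lborel (\<lambda>x. x) std_normal_density"
    unfolding distributed_def N1_def by (auto simp: distr_id2)
  have "distributed N1 lborel (\<lambda>x. a + s * x) (normal_density (a + s * 0) (\<bar>s\<bar> * 1))"
    by (rule normal_density_affine[OF d]) (use assms in auto)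
  then show ?thesis using assms by (simp add: distributed_def)
qed

definition hn :: "nat \<Rightarrow> real \<Rightarrow> real" where
  "hn k t = poly (He k) t / sqrt (fact k)"

lemma hn_measurable [measurable]: "hn k \<in> borel_measurable borel"
  unfolding hn_def by (intro borel_measurable_divide borel_measurable_continuous_onI) (auto intro: continuous_intros)

lemma integrable_N1_hn_hn: "integrable N1 (\<lambda>t. hn j t * hn k t)"
proof -
  have e: "\<And>t. hn j t * hn k t = poly (smult (1 / (sqrt (fact j) * sqrt (fact k))) (He j * He k)) t"
    by (auto simp: hn_def)
  show ?thesis unfolding e by (rule integrable_N1_poly)
qed

lemma integral_N1_hn_hn: "(\<integral>t. hn j t * hn k t \<partial>N1) = (if j = k then 1 else 0)"
proof -
  have e: "\<And>t. hn j t * hn k t = poly (smult (1 / (sqrt (fact j) * sqrt (fact k))) (He j * He k)) t"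
    by (auto simp: hn_def)
  have "(\<integral>t. hn j t * hn k t \<partial>N1) = G (He j * He k) / (sqrt (fact j) * sqrt (fact k))"
    unfolding e integral_N1_poly G_smult by simp
  also have "\<dots> = (if j = k then 1 else 0)"
    by (simp add: G_He_He real_sqrt_mult[symmetric])
  finally show ?thesis .
qed

lemma integrable_N1_hn: "integrable N1 (hn k)"
proof -
  have e: "\<And>t. hn k t = poly (smult (1 / sqrt (fact k)) (He k)) t" by (simp add: hn_def)
  show ?thesis unfolding e by (rule integrable_N1_poly)
qed


lemma nd_alt: "0 < \<sigma> \<Longrightarrow> normal_density \<mu> \<sigma> y = exp (-(y - \<mu>)\<^sup>2 / (2 * \<sigma>\<^sup>2)) / (sqrt (2 * pi) * \<sigma>)"
  unfolding normal_density_def by (simp add: real_sqrt_mult)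

lemma std_nd_alt: "std_normal_density y = exp (-y\<^sup>2 / 2) / sqrt (2 * pi)"
  using nd_alt[of 1 0 y] by simp

lemma exp_id: fixes r x y :: real assumes "r\<^sup>2 < 1" shows "-(y - r*x)\<^sup>2/(1 - r\<^sup>2) + y\<^sup>2/2 = r\<^sup>2*x\<^sup>2/(1+r\<^sup>2) + (-(y - 2*r*x/(1+r\<^sup>2))\<^sup>2 / (2 * ((1-r\<^sup>2)/(1+r\<^sup>2))))"
proof -
  define a where "a = 1 - r\<^sup>2"
  define b where "b = 1 + r\<^sup>2"
  have a: "a \<noteq> 0" using assms by (simp add: a_def)
  have b: "b \<noteq> 0" unfolding b_def by (metis add_pos_nonneg zero_le_power2 zero_less_one less_irrefl)
  have p: "-2*b*(y-r*x)\<^sup>2 + a*b*y\<^sup>2 = 2*a*r\<^sup>2*x\<^sup>2 - (b*y - 2*r*x)\<^sup>2"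
    unfolding a_def b_def by (simp add: algebra_simps power2_eq_square)
  have l: "-(y - r*x)\<^sup>2/a + y\<^sup>2/2 = (-2*b*(y-r*x)\<^sup>2 + a*b*y\<^sup>2) / (2*a*b)"
    using a b by (simp add: field_simps)
  have rr: "r\<^sup>2*x\<^sup>2/b + (-(y - 2*r*x/b)\<^sup>2 / (2 * (a/b))) = (2*a*r\<^sup>2*x\<^sup>2 - (b*y - 2*r*x)\<^sup>2) / (2*a*b)"
    using a b by (simp add: field_simps power2_eq_square)
  show ?thesis using l rr p unfolding a_def b_def by simp
qed

lemma std_nd_pos [simp]: "0 < std_normal_density y"
  by (simp add: normal_density_pos)

lemma std_nd_ne0 [simp]: "std_normal_density y \<noteq> 0"
  using std_nd_pos[of y] by linarith

locale mehler =
  fixes r :: real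
  assumes r0: "0 \<le> r" and r1: "r < 1"
begin

definition s :: real where "s = sqrt (1 - r\<^sup>2)"

lemma r2_lt1: "r\<^sup>2 < 1"
  using r0 r1 by (simp add: power2_eq_square) (metis mult_less_cancel_right2 dual_order.strict_trans1 r1 mult_less_cancel_left1 less_eq_real_def not_less zero_less_one)

lemma s_pos: "0 < s"
  using r2_lt1 by (simp add: s_def)

lemma s2: "s\<^sup>2 = 1 - r\<^sup>2"
  using r2_lt1 by (simp add: s_def)

definition k1 :: "real \<Rightarrow> real \<Rightarrow> real" where
  "k1 x y = normal_density (r * x) s y / std_normal_density y"

lemma k1_nonneg: "0 \<le> k1 x y"
  by (simp add: k1_def)

lemma k1_measurable [measurable]: "(\<lambda>(x, y). k1 x y) \<in> borel_measurable (borel \<Otimes>\<^sub>M borel)"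
  unfolding k1_def normal_density_def by measurable

lemma k1_measurable2 [measurable]: "k1 x \<in> borel_measurable borel"
  unfolding k1_def normal_density_def by measurable

lemma density_N1_k1: "density N1 (\<lambda>y. ennreal (k1 x y)) = distr N1 lborel (\<lambda>t. r * x + s * t)"
proof -
  have "density N1 (\<lambda>y. ennreal (k1 x y)) = density lborel (\<lambda>y. ennreal (std_normal_density y) * ennreal (k1 x y))"
    unfolding N1_def by (rule density_density_eq) auto
  also have "\<dots> = density lborel (normal_density (r * x) s)"
    by (intro density_cong) (auto simp: k1_def ennreal_mult'[symmetric] normal_density_pos)
  also have "\<dots> = distr N1 lborel (\<lambda>t. r * x + s * t)"
    by (rule distr_N1_affine[symmetric]) (rule s_pos)
  finally show ?thesis .
qed

lemma integrable_k1:
  assumes [measurable]: "g \<in> borel_measurable borel"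
  shows "integrable N1 (\<lambda>y. k1 x y * g y) \<longleftrightarrow> integrable N1 (\<lambda>t. g (r * x + s * t))"
proof -
  have "integrable N1 (\<lambda>y. k1 x y * g y) \<longleftrightarrow> integrable (density N1 (\<lambda>y. ennreal (k1 x y))) g"
    by (subst integrable_density) (auto simp: k1_nonneg)
  also have "\<dots> \<longleftrightarrow> integrable N1 (\<lambda>t. g (r * x + s * t))"
    unfolding density_N1_k1 by (subst integrable_distr_eq) auto
  finally show ?thesis .
qed

lemma integral_k1:
  assumes [measurable]: "g \<in> borel_measurable borel"
  shows "(\<integral>y. k1 x y * g y \<partial>N1) = (\<integral>t. g (r * x + s * t) \<partial>N1)"
proof -
  have "(\<integral>y. k1 x y * g y \<partial>N1) = integral\<^sup>L (density N1 (\<lambda>y. ennreal (k1 x y))) g"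
    by (subst integral_density) (auto simp: k1_nonneg)
  also have "\<dots> = (\<integral>t. g (r * x + s * t) \<partial>N1)"
    unfolding density_N1_k1 by (subst integral_distr) auto
  finally show ?thesis .
qed

lemma hn_compose: "hn k (r * x + s * t) = poly (smult (1 / sqrt (fact k)) (pcompose (He k) [:r * x, s:])) t"
  by (simp add: hn_def poly_pcompose ac_simps)

lemma integrable_k1_hn: "integrable N1 (\<lambda>y. k1 x y * hn k y)"
  by (subst integrable_k1) (auto simp: hn_compose integrable_N1_poly)

lemma integral_k1_hn: "(\<integral>y. k1 x y * hn k y \<partial>N1) = r ^ k * hn k x"
proof -
  have "(\<integral>y. k1 x y * hn k y \<partial>N1) = G (smult (1 / sqrt (fact k)) (pcompose (He k) [:r * x, s:]))"
    by (subst integral_k1) (auto simp: hn_compose integral_N1_poly G_smult)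
  also have "\<dots> = r ^ k * hn k x"
    by (simp add: G_smult G_He_compose[OF s2] hn_def)
  finally show ?thesis .
qed

definition Q :: "real \<Rightarrow> real" where
  "Q x = exp (r\<^sup>2 * x\<^sup>2 / (1 + r\<^sup>2)) / (s * sqrt (1 + r\<^sup>2))"

lemma k1_sq_eq:
  "std_normal_density y * (k1 x y)\<^sup>2 = Q x * normal_density (2 * r * x / (1 + r\<^sup>2)) (s / sqrt (1 + r\<^sup>2)) y"
proof -
  let ?m = "2 * r * x / (1 + r\<^sup>2)" and ?\<sigma> = "s / sqrt (1 + r\<^sup>2)"
  have sp: "0 < s" by (rule s_pos)
  have r2p: "0 < 1 + r\<^sup>2" by (simp add: add_pos_nonneg)
  have sq: "sqrt (1 + r\<^sup>2) > 0" using r2p by simp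
  have sigp: "0 < ?\<sigma>" using sp sq by simp
  have exps: "-(y - r * x)\<^sup>2 / s\<^sup>2 + y\<^sup>2 / 2 = r\<^sup>2 * x\<^sup>2 / (1 + r\<^sup>2) + (-(y - ?m)\<^sup>2 / (2 * ?\<sigma>\<^sup>2))"
  proof -
    have sig2: "?\<sigma>\<^sup>2 = (1 - r\<^sup>2) / (1 + r\<^sup>2)"
      using r2p by (simp add: power_divide s2)
    show ?thesis using exp_id[OF r2_lt1, of y x] unfolding sig2 s2 by simp
  qed
  have "std_normal_density y * (k1 x y)\<^sup>2 = (normal_density (r * x) s y)\<^sup>2 / std_normal_density y"
    by (simp add: k1_def power2_eq_square)
  also have "\<dots> = exp (-(y - r * x)\<^sup>2 / s\<^sup>2 + y\<^sup>2 / 2) / (sqrt (2 * pi) * s\<^sup>2)"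
  proof -
    define c where "c = sqrt (2 * pi)"
    have c: "0 < c" by (simp add: c_def)
    have cc: "2 * pi = c\<^sup>2" by (simp add: c_def)
    define A where "A = exp (-(y - r * x)\<^sup>2 / s\<^sup>2)"
    define B where "B = exp (-y\<^sup>2 / 2)"
    have B: "0 < B" by (simp add: B_def)
    have e1: "(normal_density (r * x) s y)\<^sup>2 = A / (c\<^sup>2 * s\<^sup>2)"
    proof -
      have "(exp (-(y - r * x)\<^sup>2 / (2 * s\<^sup>2)))\<^sup>2 = A"
        unfolding A_def power2_eq_square[of "exp _"] exp_add[symmetric] by simp
      then show ?thesis using sp by (simp add: nd_alt c_def[symmetric] power_divide power_mult_distrib)
    qed
    have e2: "std_normal_density y = B / c" by (simp add: std_nd_alt B_def c_def)
    have e3: "exp (-(y - r * x)\<^sup>2 / s\<^sup>2 + y\<^sup>2 / 2) = A / B"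
      unfolding A_def B_def by (simp add: exp_diff[symmetric])
    show ?thesis unfolding e1 e2 e3 c_def[symmetric] using c B sp by (simp add: field_simps power2_eq_square)
  qed
  also have "\<dots> = Q x * normal_density ?m ?\<sigma> y"
  proof -
    have nd: "normal_density ?m ?\<sigma> y = exp (-(y - ?m)\<^sup>2 / (2 * ?\<sigma>\<^sup>2)) / (sqrt (2 * pi) * ?\<sigma>)"
      by (rule nd_alt[OF sigp])
    have gen: "\<And>a b c q. 0 < c \<Longrightarrow> 0 < q \<Longrightarrow> a * b / (c * s\<^sup>2) = a / (s * q) * (b / (c * (s / q)))"
      using sp by (simp add: field_simps power2_eq_square)
    show ?thesis unfolding exps exp_add nd Q_def
      by (rule gen) (use sq in auto)
  qed
  finally show ?thesis .
qed

end


context mehler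
begin

lemma Q_measurable [measurable]: "Q \<in> borel_measurable borel"
  unfolding Q_def by measurable

lemma Q_nonneg: "0 \<le> Q x"
  using s_pos by (simp add: Q_def)

lemma sig1_pos: "0 < s / sqrt (1 + r\<^sup>2)"
  using s_pos by (simp add: add_pos_nonneg)

lemma sig3_pos: "0 < sqrt (1 + r\<^sup>2) / s"
  using s_pos by (simp add: add_pos_nonneg)

lemma rk2: "r ^ (2 * k) = r ^ k * r ^ k"
  by (simp add: power_add[symmetric] mult_2)

lemma integrable_k1_sq: "integrable N1 (\<lambda>y. (k1 x y)\<^sup>2)"
  by (subst integrable_N1_iff) (auto simp: k1_sq_eq intro!: integrable_mult_right integrable_normal_density sig1_pos)

lemma integral_k1_sq: "(\<integral>y. (k1 x y)\<^sup>2 \<partial>N1) = Q x"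
  by (subst integral_N1) (auto simp: k1_sq_eq integral_normal_density[OF sig1_pos])

lemma Q_eq: "std_normal_density x * Q x = (1 / s\<^sup>2) * normal_density 0 (sqrt (1 + r\<^sup>2) / s) x"
proof -
  have sp: "0 < s" by (rule s_pos)
  have r2p: "0 < 1 + r\<^sup>2" by (simp add: add_pos_nonneg)
  define q where "q = sqrt (1 + r\<^sup>2)"
  have q: "0 < q" using r2p by (simp add: q_def)
  have q2: "q\<^sup>2 = 1 + r\<^sup>2" using r2p by (simp add: q_def)
  have sig: "0 < q / s" using q sp by simp
  have ex: "-x\<^sup>2 / 2 + r\<^sup>2 * x\<^sup>2 / (1 + r\<^sup>2) = -(x - 0)\<^sup>2 / (2 * (q / s)\<^sup>2)"
  proof -
    have "1 + r\<^sup>2 \<noteq> 0" using r2p by simp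
    then show ?thesis unfolding power_divide q2 s2 by (simp add: field_simps)
  qed
  have "std_normal_density x * Q x = exp (-x\<^sup>2 / 2) * exp (r\<^sup>2 * x\<^sup>2 / (1 + r\<^sup>2)) / (sqrt (2 * pi) * (s * q))"
    by (simp add: std_nd_alt Q_def q_def)
  also have "\<dots> = exp (-(x - 0)\<^sup>2 / (2 * (q / s)\<^sup>2)) / (sqrt (2 * pi) * (s * q))"
    unfolding exp_add[symmetric] ex ..
  also have "\<dots> = (1 / s\<^sup>2) * normal_density 0 (q / s) x"
    unfolding nd_alt[OF sig] using sp q by (simp add: field_simps power2_eq_square)
  finally show ?thesis by (simp add: q_def)
qed

lemma integrable_Q: "integrable N1 Q"
  by (subst integrable_N1_iff) (auto simp: Q_eq intro!: integrable_mult_right integrable_normal_density sig3_pos)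

lemma integral_Q: "(\<integral>x. Q x \<partial>N1) = 1 / (1 - r\<^sup>2)"
  by (subst integral_N1) (auto simp: Q_eq s2 integral_normal_density[OF sig3_pos])

definition sN :: "nat \<Rightarrow> real \<Rightarrow> real \<Rightarrow> real" where
  "sN n x y = (\<Sum>k\<le>n. r ^ k * hn k x * hn k y)"

definition W :: "nat \<Rightarrow> real \<Rightarrow> real" where
  "W n x = (\<Sum>k\<le>n. r ^ (2 * k) * (hn k x)\<^sup>2)"

lemma sN_measurable [measurable]: "(\<lambda>(x, y). sN n x y) \<in> borel_measurable (borel \<Otimes>\<^sub>M borel)"
  unfolding sN_def by measurable

lemma W_measurable [measurable]: "W n \<in> borel_measurable borel"
  unfolding W_def by measurable

lemma k1_sN_eq: "k1 x y * sN n x y = (\<Sum>k\<le>n. (r ^ k * hn k x) * (k1 x y * hn k y))"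
  unfolding sN_def sum_distrib_left by (simp add: ac_simps)

lemma integrable_k1_sN: "integrable N1 (\<lambda>y. k1 x y * sN n x y)"
  unfolding k1_sN_eq
  by (rule Bochner_Integration.integrable_sum) (auto intro!: integrable_mult_right simp: integrable_k1_hn)

lemma integral_k1_sN: "(\<integral>y. k1 x y * sN n x y \<partial>N1) = W n x"
proof -
  have "(\<integral>y. k1 x y * sN n x y \<partial>N1) = (\<Sum>k\<le>n. (r ^ k * hn k x) * (r ^ k * hn k x))"
    unfolding k1_sN_eq
    by (subst Bochner_Integration.integral_sum) (auto simp: integrable_k1_hn integral_k1_hn)
  also have "\<dots> = W n x"
    unfolding W_def by (intro sum.cong) (auto simp: rk2 power2_eq_square)
  finally show ?thesis .
qed

lemma sN_sq: "(sN n x y)\<^sup>2 = (\<Sum>j\<le>n. \<Sum>k\<le>n. (r ^ j * hn j x * r ^ k * hn k x) * (hn j y * hn k y))"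
  unfolding sN_def power2_eq_square sum_product by (simp add: ac_simps)

lemma integrable_sN_sq: "integrable N1 (\<lambda>y. (sN n x y)\<^sup>2)"
  unfolding sN_sq
  by (intro Bochner_Integration.integrable_sum integrable_mult_right integrable_N1_hn_hn)

lemma integral_sN_sq: "(\<integral>y. (sN n x y)\<^sup>2 \<partial>N1) = W n x"
proof -
  have i1: "\<And>j. integrable N1 (\<lambda>y. \<Sum>k\<le>n. (r ^ j * hn j x * r ^ k * hn k x) * (hn j y * hn k y))"
    by (intro Bochner_Integration.integrable_sum integrable_mult_right integrable_N1_hn_hn)
  have i2: "\<And>j. (\<integral>y. (\<Sum>k\<le>n. (r ^ j * hn j x * r ^ k * hn k x) * (hn j y * hn k y)) \<partial>N1)
      = (\<Sum>k\<le>n. (r ^ j * hn j x * r ^ k * hn k x) * (if j = k then 1 else 0))"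
    by (subst Bochner_Integration.integral_sum) (auto simp: integrable_N1_hn_hn integral_N1_hn_hn)
  have "(\<integral>y. (sN n x y)\<^sup>2 \<partial>N1) = (\<Sum>j\<le>n. \<Sum>k\<le>n. (r ^ j * hn j x * r ^ k * hn k x) * (if j = k then 1 else 0))"
    unfolding sN_sq by (subst Bochner_Integration.integral_sum) (auto simp: i1 i2)
  also have "\<dots> = (\<Sum>j\<le>n. r ^ j * hn j x * r ^ j * hn j x)"
    by (intro sum.cong refl) (simp add: if_distrib sum.delta cong: if_cong)
  also have "\<dots> = W n x"
    unfolding W_def by (intro sum.cong) (auto simp: rk2 power2_eq_square)
  finally show ?thesis .
qed

lemma integrable_W: "integrable N1 (W n)"
  unfolding W_def power2_eq_square
  by (intro Bochner_Integration.integrable_sum integrable_mult_right integrable_N1_hn_hn)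

definition C :: "nat \<Rightarrow> real" where
  "C n = (\<Sum>k\<le>n. r ^ (2 * k))"

lemma integral_W: "(\<integral>x. W n x \<partial>N1) = C n"
  unfolding W_def power2_eq_square
  by (subst Bochner_Integration.integral_sum) (auto simp: integrable_N1_hn_hn integral_N1_hn_hn C_def)

lemma C_tendsto: "C \<longlonglongrightarrow> 1 / (1 - r\<^sup>2)"
proof -
  have "(\<lambda>k. (r\<^sup>2) ^ k) sums (1 / (1 - r\<^sup>2))"
    by (rule geometric_sums) (use r0 r2_lt1 in auto)
  then have "(\<lambda>n. \<Sum>k<n. (r\<^sup>2) ^ k) \<longlonglongrightarrow> 1 / (1 - r\<^sup>2)"
    by (simp add: sums_def)
  then have "(\<lambda>n. \<Sum>k<Suc n. (r\<^sup>2) ^ k) \<longlonglongrightarrow> 1 / (1 - r\<^sup>2)"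
    by (rule LIMSEQ_Suc)
  moreover have "(\<lambda>n. \<Sum>k<Suc n. (r\<^sup>2) ^ k) = C"
    by (auto simp: C_def lessThan_Suc_atMost power_mult)
  ultimately show ?thesis by simp
qed

lemma C_nonneg: "0 \<le> C n"
  by (simp add: C_def sum_nonneg)

end


definition PN :: "('n::finite \<Rightarrow> real) measure" where
  "PN = PiM UNIV (\<lambda>_. N1)"

lemma product_prob_space_N1: "product_prob_space (\<lambda>_::'n. N1)"
  by (intro product_prob_spaceI) (rule prob_space_N1)

lemma prob_space_PN: "prob_space (PN :: ('n::finite \<Rightarrow> real) measure)"
  unfolding PN_def by (intro prob_space_PiM) (rule prob_space_N1)

lemma sets_PN [measurable_cong]: "sets (PN :: ('n::finite \<Rightarrow> real) measure) = sets (PiM UNIV (\<lambda>_::'n. borel))"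
  unfolding PN_def by (intro sets_PiM_cong) auto

lemma space_PN [simp]: "space (PN :: ('n::finite \<Rightarrow> real) measure) = UNIV"
  by (simp add: PN_def space_PiM)

lemma PN_integrable_prod:
  fixes g :: "'n::finite \<Rightarrow> real \<Rightarrow> real"
  assumes "\<And>i. integrable N1 (g i)"
  shows "integrable PN (\<lambda>x. \<Prod>i\<in>UNIV. g i (x i))"
proof -
  interpret product_prob_space "\<lambda>_::'n. N1" by (rule product_prob_space_N1)
  show ?thesis unfolding PN_def by (rule product_integrable_prod) (auto simp: assms)
qed

lemma PN_integral_prod:
  fixes g :: "'n::finite \<Rightarrow> real \<Rightarrow> real"
  assumes "\<And>i. integrable N1 (g i)"
  shows "(\<integral>x. (\<Prod>i\<in>UNIV. g i (x i)) \<partial>PN) = (\<Prod>i\<in>UNIV. \<integral>t. g i t \<partial>N1)"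
proof -
  interpret product_prob_space "\<lambda>_::'n. N1" by (rule product_prob_space_N1)
  show ?thesis unfolding PN_def by (rule product_integral_prod) (auto simp: assms)
qed

lemma PN_measurable_prod [measurable]:
  fixes g :: "'n::finite \<Rightarrow> real \<Rightarrow> real"
  assumes [measurable]: "\<And>i. g i \<in> borel_measurable borel"
  shows "(\<lambda>x. \<Prod>i\<in>UNIV. g i (x i)) \<in> borel_measurable PN"
  unfolding PN_def by measurable

context mehler
begin

definition KK :: "('n::finite \<Rightarrow> real) \<Rightarrow> ('n \<Rightarrow> real) \<Rightarrow> real" where
  "KK x y = (\<Prod>i\<in>UNIV. k1 (x i) (y i))"

definition SS :: "nat \<Rightarrow> ('n::finite \<Rightarrow> real) \<Rightarrow> ('n \<Rightarrow> real) \<Rightarrow> real" where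
  "SS n x y = (\<Prod>i\<in>UNIV. sN n (x i) (y i))"

lemma KK_measurable [measurable]: "(\<lambda>y. KK x y) \<in> borel_measurable PN"
  unfolding KK_def by (rule PN_measurable_prod) simp

lemma SS_measurable [measurable]: "(\<lambda>y. SS n x y) \<in> borel_measurable PN"
proof -
  have [measurable]: "\<And>a. sN n a \<in> borel_measurable borel"
    using measurable_Pair2[OF sN_measurable] by simp
  show ?thesis unfolding SS_def by (rule PN_measurable_prod) simp
qed

lemma KK_sq: "(KK x y)\<^sup>2 = (\<Prod>i\<in>UNIV. (k1 (x i) (y i))\<^sup>2)"
  by (simp add: KK_def prod_power_distrib)

lemma SS_sq: "(SS n x y)\<^sup>2 = (\<Prod>i\<in>UNIV. (sN n (x i) (y i))\<^sup>2)"
  by (simp add: SS_def prod_power_distrib)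

lemma KK_SS: "KK x y * SS n x y = (\<Prod>i\<in>UNIV. k1 (x i) (y i) * sN n (x i) (y i))"
  by (simp add: KK_def SS_def prod.distrib)

lemma integrable_KK_sq: "integrable PN (\<lambda>y. (KK x y)\<^sup>2)"
  unfolding KK_sq by (rule PN_integrable_prod) (rule integrable_k1_sq)

lemma integral_KK_sq: "(\<integral>y. (KK x y)\<^sup>2 \<partial>PN) = (\<Prod>i\<in>UNIV. Q (x i))"
  unfolding KK_sq by (subst PN_integral_prod) (auto simp: integrable_k1_sq integral_k1_sq)

lemma integrable_SS_sq: "integrable PN (\<lambda>y. (SS n x y)\<^sup>2)"
  unfolding SS_sq by (rule PN_integrable_prod) (rule integrable_sN_sq)

lemma integral_SS_sq: "(\<integral>y. (SS n x y)\<^sup>2 \<partial>PN) = (\<Prod>i\<in>UNIV. W n (x i))"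
  unfolding SS_sq by (subst PN_integral_prod) (auto simp: integrable_sN_sq integral_sN_sq)

lemma integrable_KK_SS: "integrable PN (\<lambda>y. KK x y * SS n x y)"
  unfolding KK_SS by (rule PN_integrable_prod) (rule integrable_k1_sN)

lemma integral_KK_SS: "(\<integral>y. KK x y * SS n x y \<partial>PN) = (\<Prod>i\<in>UNIV. W n (x i))"
  unfolding KK_SS by (subst PN_integral_prod) (auto simp: integrable_k1_sN integral_k1_sN)

lemma integrable_KS_diff_sq: "integrable PN (\<lambda>y. (KK x y - SS n x y)\<^sup>2)"
  unfolding power2_diff
  by (intro Bochner_Integration.integrable_diff Bochner_Integration.integrable_add integrable_KK_sq integrable_SS_sq integrable_mult_right)
     (simp add: mult.assoc integrable_KK_SS)

lemma integral_KS_diff_sq: "(\<integral>y. (KK x y - SS n x y)\<^sup>2 \<partial>PN) = (\<Prod>i\<in>UNIV. Q (x i)) - (\<Prod>i\<in>UNIV. W n (x i))"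
proof -
  have i3: "integrable PN (\<lambda>y. 2 * KK x y * SS n x y)"
    by (simp add: mult.assoc integrable_KK_SS)
  have "(\<integral>y. (KK x y)\<^sup>2 + (SS n x y)\<^sup>2 - 2 * KK x y * SS n x y \<partial>PN)
      = (\<integral>y. (KK x y)\<^sup>2 + (SS n x y)\<^sup>2 \<partial>PN) - (\<integral>y. 2 * KK x y * SS n x y \<partial>PN)"
    by (rule Bochner_Integration.integral_diff) (auto intro!: integrable_KK_sq integrable_SS_sq i3)
  also have "(\<integral>y. (KK x y)\<^sup>2 + (SS n x y)\<^sup>2 \<partial>PN) = (\<integral>y. (KK x y)\<^sup>2 \<partial>PN) + (\<integral>y. (SS n x y)\<^sup>2 \<partial>PN)"
    by (rule Bochner_Integration.integral_add) (auto intro!: integrable_KK_sq integrable_SS_sq)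
  also have "(\<integral>y. 2 * KK x y * SS n x y \<partial>PN) = 2 * (\<integral>y. KK x y * SS n x y \<partial>PN)"
    by (simp add: mult.assoc)
  finally show ?thesis unfolding power2_diff integral_KK_sq integral_SS_sq integral_KK_SS by simp
qed

lemma integrable_prod_Q: "integrable PN (\<lambda>x::'n::finite \<Rightarrow> real. \<Prod>i\<in>UNIV. Q (x i))"
  by (rule PN_integrable_prod) (rule integrable_Q)

lemma integrable_prod_W: "integrable PN (\<lambda>x::'n::finite \<Rightarrow> real. \<Prod>i\<in>UNIV. W n (x i))"
  by (rule PN_integrable_prod) (rule integrable_W)

lemma integral_prod_Q: "(\<integral>x. (\<Prod>i\<in>UNIV. Q (x i)) \<partial>(PN::('n::finite \<Rightarrow> real) measure)) = (1 / (1 - r\<^sup>2)) ^ CARD('n)"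
  by (subst PN_integral_prod) (auto simp: integrable_Q integral_Q)

lemma integral_prod_W: "(\<integral>x. (\<Prod>i\<in>UNIV. W n (x i)) \<partial>(PN::('n::finite \<Rightarrow> real) measure)) = C n ^ CARD('n)"
  by (subst PN_integral_prod) (auto simp: integrable_W integral_W)

end


lemma indicator_PiE_UNIV:
  fixes A :: "'n::finite \<Rightarrow> real set"
  shows "indicator (PiE UNIV A) y = (\<Prod>i\<in>UNIV. indicator (A i) (y i) :: ennreal)"
proof (cases "\<forall>i. y i \<in> A i")
  case True
  then show ?thesis by (simp add: indicator_def PiE_iff)
next
  case False
  then obtain i where "y i \<notin> A i" by blast
  then have "(\<Prod>i\<in>UNIV. indicator (A i) (y i) :: ennreal) = 0"
  proof (intro prod_zero)
    show "\<exists>a\<in>UNIV. indicator (A a) (y a) = (0::ennreal)"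
      using \<open>y i \<notin> A i\<close> by (intro bexI[of _ i]) auto
  qed simp
  then show ?thesis using False by (simp add: indicator_def PiE_iff)
qed

lemma meas_aff_borel: "(\<lambda>z i. a i + b * z i) \<in> measurable (PiM UNIV (\<lambda>_::'n::finite. borel)) (PiM UNIV (\<lambda>_::'n. (borel::real measure)))"
  by (rule measurable_PiM_single'[where f="\<lambda>i z. a i + b * z i"]) (auto simp: space_PiM)

lemma meas_aff_PN [measurable]: "(\<lambda>z i. a i + b * z i) \<in> measurable (PN :: ('n::finite \<Rightarrow> real) measure) PN"
  using meas_aff_borel by (subst measurable_cong_sets[OF sets_PN sets_PN])

lemma meas_aff_PiN1 [measurable]: "(\<lambda>z i. a i + b * z i) \<in> measurable (PiM UNIV (\<lambda>_::'n::finite. N1)) (PiM UNIV (\<lambda>_. N1))"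
  using meas_aff_PN unfolding PN_def .

context mehler
begin

definition Mx :: "('n::finite \<Rightarrow> real) \<Rightarrow> 'n \<Rightarrow> real measure" where
  "Mx x i = distr N1 lborel (\<lambda>t. r * x i + s * t)"

lemma prob_space_Mx: "prob_space (Mx x i)"
proof -
  interpret prob_space N1 by (rule prob_space_N1)
  show ?thesis unfolding Mx_def by (rule prob_space_distr) simp
qed

lemma sets_Mx [simp]: "sets (Mx x i) = sets borel"
  by (simp add: Mx_def)

lemma product_prob_space_Mx: "product_prob_space (Mx x)"
  by (intro product_prob_spaceI) (rule prob_space_Mx)

lemma density_PN_KK: "density PN (\<lambda>y. ennreal (KK x y)) = PiM UNIV (Mx (x::'n::finite \<Rightarrow> real))"
proof -
  interpret product_prob_space "Mx x" by (rule product_prob_space_Mx)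
  interpret N: product_prob_space "\<lambda>_::'n. N1" by (rule product_prob_space_N1)
  show ?thesis
  proof (rule PiM_eqI)
    show "sets (density PN (\<lambda>y. ennreal (KK x y))) = sets (PiM UNIV (Mx x))"
      by (simp add: sets_PN cong: sets_PiM_cong)
  next
    fix A assume A: "\<And>i. i \<in> UNIV \<Longrightarrow> A i \<in> sets (Mx x i)"
    then have [measurable]: "\<And>i. A i \<in> sets borel" by simp
    have "emeasure (density PN (\<lambda>y. ennreal (KK x y))) (PiE UNIV A)
        = (\<integral>\<^sup>+y. ennreal (KK x y) * indicator (PiE UNIV A) y \<partial>PN)"
      by (subst emeasure_density) (auto simp: sets_PN intro!: sets_PiM_I_finite)
    also have "\<dots> = (\<integral>\<^sup>+y. (\<Prod>i\<in>UNIV. ennreal (k1 (x i) (y i)) * indicator (A i) (y i)) \<partial>PiM UNIV (\<lambda>_. N1))"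
      unfolding PN_def indicator_PiE_UNIV KK_def
      by (simp add: prod_ennreal[symmetric] k1_nonneg prod.distrib)
    also have "\<dots> = (\<Prod>i\<in>UNIV. \<integral>\<^sup>+t. ennreal (k1 (x i) t) * indicator (A i) t \<partial>N1)"
      by (rule N.product_nn_integral_prod) auto
    also have "\<dots> = (\<Prod>i\<in>UNIV. emeasure (Mx x i) (A i))"
      by (intro prod.cong refl)
         (simp add: Mx_def density_N1_k1[symmetric] emeasure_density)
    finally show "emeasure (density PN (\<lambda>y. ennreal (KK x y))) (PiE UNIV A) = (\<Prod>i\<in>UNIV. emeasure (Mx x i) (A i))" .
  qed simp
qed

lemma distr_PN_affine: "distr PN PN (\<lambda>z i. r * x i + s * z i) = PiM UNIV (Mx (x::'n::finite \<Rightarrow> real))"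
proof -
  interpret product_prob_space "Mx x" by (rule product_prob_space_Mx)
  interpret N: product_prob_space "\<lambda>_::'n. N1" by (rule product_prob_space_N1)
  have meas [measurable]: "(\<lambda>z i. r * x i + s * z i) \<in> measurable PN PN"
    by (rule meas_aff_PN)
  show ?thesis
  proof (rule PiM_eqI)
    show "sets (distr PN PN (\<lambda>z i. r * x i + s * z i)) = sets (PiM UNIV (Mx x))"
      by (simp add: sets_PN cong: sets_PiM_cong)
  next
    fix A assume A: "\<And>i. i \<in> UNIV \<Longrightarrow> A i \<in> sets (Mx x i)"
    then have [measurable]: "\<And>i. A i \<in> sets borel" by simp
    have pm: "\<And>i. (\<lambda>t. r * x i + s * t) -` A i \<in> sets borel"
    proof -
      fix i
      have "{t. r * x i + s * t \<in> A i} \<in> sets borel" by measurable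
      then show "(\<lambda>t. r * x i + s * t) -` A i \<in> sets borel" by (simp add: vimage_def)
    qed
    have pre: "(\<lambda>z i. r * x i + s * z i) -` PiE UNIV A = PiE UNIV (\<lambda>i. (\<lambda>t. r * x i + s * t) -` A i)"
      by (auto simp: PiE_iff)
    have "emeasure (distr PN PN (\<lambda>z i. r * x i + s * z i)) (PiE UNIV A)
        = emeasure PN (PiE UNIV (\<lambda>i. (\<lambda>t. r * x i + s * t) -` A i))"
      by (subst emeasure_distr) (auto simp: pre sets_PN intro!: sets_PiM_I_finite)
    also have "\<dots> = (\<Prod>i\<in>UNIV. emeasure N1 ((\<lambda>t. r * x i + s * t) -` A i))"
      unfolding PN_def by (rule N.emeasure_PiM) (auto simp: pm)
    also have "\<dots> = (\<Prod>i\<in>UNIV. emeasure (Mx x i) (A i))"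
      by (intro prod.cong refl) (simp add: Mx_def emeasure_distr)
    finally show "emeasure (distr PN PN (\<lambda>z i. r * x i + s * z i)) (PiE UNIV A) = (\<Prod>i\<in>UNIV. emeasure (Mx x i) (A i))" .
  qed simp
qed

lemma density_PN_KK': "density PN (\<lambda>y. ennreal (KK x y)) = distr PN PN (\<lambda>z i. r * x i + s * z i)"
  by (simp add: density_PN_KK distr_PN_affine)

lemma KK_nonneg: "0 \<le> KK x y"
  by (simp add: KK_def prod_nonneg k1_nonneg)

lemma integrable_KK_iff:
  assumes [measurable]: "g \<in> borel_measurable PN"
  shows "integrable PN (\<lambda>y. KK x y * g y) \<longleftrightarrow> integrable PN (\<lambda>z. g (\<lambda>i. r * x i + s * z i))"
proof -
  have "integrable PN (\<lambda>y. KK x y * g y) \<longleftrightarrow> integrable (density PN (\<lambda>y. ennreal (KK x y))) g"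
    by (subst integrable_density) (auto simp: KK_nonneg)
  also have "\<dots> \<longleftrightarrow> integrable PN (\<lambda>z. g (\<lambda>i. r * x i + s * z i))"
    unfolding density_PN_KK' by (subst integrable_distr_eq) (auto simp: PN_def)
  finally show ?thesis .
qed

lemma integral_KK:
  assumes [measurable]: "g \<in> borel_measurable PN"
  shows "(\<integral>y. KK x y * g y \<partial>PN) = (\<integral>z. g (\<lambda>i. r * x i + s * z i) \<partial>PN)"
proof -
  have "(\<integral>y. KK x y * g y \<partial>PN) = integral\<^sup>L (density PN (\<lambda>y. ennreal (KK x y))) g"
    by (subst integral_density) (auto simp: KK_nonneg)
  also have "\<dots> = (\<integral>z. g (\<lambda>i. r * x i + s * z i) \<partial>PN)"
    unfolding density_PN_KK' by (subst integral_distr) (auto simp: PN_def)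
  finally show ?thesis .
qed

end


lemma (in prob_space) L1_le_L2:
  fixes g :: "'a \<Rightarrow> real"
  assumes [measurable]: "g \<in> borel_measurable M" and sq: "integrable M (\<lambda>x. (g x)\<^sup>2)"
  shows "integrable M g" "(\<integral>x. \<bar>g x\<bar> \<partial>M) \<le> sqrt (\<integral>x. (g x)\<^sup>2 \<partial>M)"
proof -
  show ig: "integrable M g" by (rule square_integrable_imp_integrable) (auto simp: sq)
  let ?m = "\<integral>x. \<bar>g x\<bar> \<partial>M"
  have ia: "integrable M (\<lambda>x. \<bar>g x\<bar>)" using ig by simp
  have "0 \<le> (\<integral>x. (\<bar>g x\<bar> - ?m)\<^sup>2 \<partial>M)" by simp
  also have "(\<integral>x. (\<bar>g x\<bar> - ?m)\<^sup>2 \<partial>M) = (\<integral>x. (g x)\<^sup>2 - 2 * ?m * \<bar>g x\<bar> + ?m\<^sup>2 \<partial>M)"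
    by (simp add: power2_diff power2_abs algebra_simps)
  also have "\<dots> = (\<integral>x. (g x)\<^sup>2 \<partial>M) - 2 * ?m * ?m + ?m\<^sup>2"
    using sq ia by (simp add: prob_space)
  finally have "?m\<^sup>2 \<le> (\<integral>x. (g x)\<^sup>2 \<partial>M)" by (simp add: power2_eq_square)
  then show "?m \<le> sqrt (\<integral>x. (g x)\<^sup>2 \<partial>M)"
    using real_le_rsqrt by blast
qed

definition hA :: "('n::finite \<Rightarrow> nat) \<Rightarrow> ('n \<Rightarrow> real) \<Rightarrow> real" where
  "hA \<alpha> x = (\<Prod>i\<in>UNIV. hn (\<alpha> i) (x i))"

lemma hA_measurable [measurable]: "hA \<alpha> \<in> borel_measurable PN"
  unfolding hA_def by (rule PN_measurable_prod) simp

lemma integrable_hA: "integrable PN (hA \<alpha>)"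
  unfolding hA_def by (rule PN_integrable_prod) (rule integrable_N1_hn)

lemma hA_hA: "hA \<alpha> x * hA \<beta> x = (\<Prod>i\<in>UNIV. hn (\<alpha> i) (x i) * hn (\<beta> i) (x i))"
  by (simp add: hA_def prod.distrib)

lemma integrable_hA_hA: "integrable PN (\<lambda>x. hA \<alpha> x * hA \<beta> x)"
  unfolding hA_hA by (rule PN_integrable_prod) (rule integrable_N1_hn_hn)

lemma integral_hA_hA: "(\<integral>x. hA \<alpha> x * hA \<beta> x \<partial>PN) = (if \<alpha> = \<beta> then 1 else 0)"
proof -
  have "(\<integral>x. hA \<alpha> x * hA \<beta> x \<partial>PN) = (\<Prod>i\<in>UNIV. if \<alpha> i = \<beta> i then 1 else 0)"
    unfolding hA_hA by (subst PN_integral_prod) (auto simp: integrable_N1_hn_hn integral_N1_hn_hn)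
  also have "\<dots> = (if \<alpha> = \<beta> then 1 else 0)"
  proof (cases "\<alpha> = \<beta>")
    case False
    then obtain i where "\<alpha> i \<noteq> \<beta> i" by auto
    then have "(\<Prod>i\<in>UNIV. if \<alpha> i = \<beta> i then 1 else 0) = (0::real)"
      by (intro prod_zero) (auto intro!: bexI[of _ i])
    then show ?thesis using False by simp
  qed simp
  finally show ?thesis .
qed

lemma sum_hA_sq:
  assumes "finite B"
  shows "integrable PN (\<lambda>x. (\<Sum>\<alpha>\<in>B. a \<alpha> * hA \<alpha> x)\<^sup>2)"
    "(\<integral>x. (\<Sum>\<alpha>\<in>B. a \<alpha> * hA \<alpha> x)\<^sup>2 \<partial>PN) = (\<Sum>\<alpha>\<in>B. (a \<alpha>)\<^sup>2)"
proof -
  have e: "(\<Sum>\<alpha>\<in>B. a \<alpha> * hA \<alpha> x)\<^sup>2 = (\<Sum>\<alpha>\<in>B. \<Sum>\<beta>\<in>B. (a \<alpha> * a \<beta>) * (hA \<alpha> x * hA \<beta> x))" for x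
    unfolding power2_eq_square sum_product by (simp add: ac_simps)
  show "integrable PN (\<lambda>x. (\<Sum>\<alpha>\<in>B. a \<alpha> * hA \<alpha> x)\<^sup>2)"
    unfolding e by (intro Bochner_Integration.integrable_sum integrable_mult_right integrable_hA_hA)
  have i2: "\<And>\<alpha>. (\<integral>x. (\<Sum>\<beta>\<in>B. (a \<alpha> * a \<beta>) * (hA \<alpha> x * hA \<beta> x)) \<partial>PN) = (\<Sum>\<beta>\<in>B. (a \<alpha> * a \<beta>) * (if \<alpha> = \<beta> then 1 else 0))"
    by (subst Bochner_Integration.integral_sum) (auto simp: integrable_hA_hA integral_hA_hA)
  have "(\<integral>x. (\<Sum>\<alpha>\<in>B. a \<alpha> * hA \<alpha> x)\<^sup>2 \<partial>PN) = (\<Sum>\<alpha>\<in>B. \<Sum>\<beta>\<in>B. (a \<alpha> * a \<beta>) * (if \<alpha> = \<beta> then 1 else 0))"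
    unfolding e
    by (subst Bochner_Integration.integral_sum)
       (auto simp: i2 intro!: Bochner_Integration.integrable_sum integrable_mult_right integrable_hA_hA)
  also have "\<dots> = (\<Sum>\<alpha>\<in>B. (a \<alpha>)\<^sup>2)"
    using assms by (intro sum.cong refl) (simp add: if_distrib sum.delta power2_eq_square cong: if_cong)
  finally show "(\<integral>x. (\<Sum>\<alpha>\<in>B. a \<alpha> * hA \<alpha> x)\<^sup>2 \<partial>PN) = (\<Sum>\<alpha>\<in>B. (a \<alpha>)\<^sup>2)" .
qed

context mehler
begin

lemma SS_expand:
  "SS n x y = (\<Sum>\<alpha>\<in>PiE UNIV (\<lambda>_. {..n}). r ^ (\<Sum>i\<in>UNIV. \<alpha> i) * hA \<alpha> x * hA \<alpha> y)"
proof -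
  have "SS n x y = (\<Prod>i\<in>UNIV. \<Sum>k\<le>n. r ^ k * hn k (x i) * hn k (y i))"
    by (simp add: SS_def sN_def)
  also have "\<dots> = (\<Sum>\<alpha>\<in>PiE UNIV (\<lambda>_. {..n}). \<Prod>i\<in>UNIV. r ^ (\<alpha> i) * hn (\<alpha> i) (x i) * hn (\<alpha> i) (y i))"
    by (rule prod_sum_PiE) auto
  also have "\<dots> = (\<Sum>\<alpha>\<in>PiE UNIV (\<lambda>_. {..n}). r ^ (\<Sum>i\<in>UNIV. \<alpha> i) * hA \<alpha> x * hA \<alpha> y)"
    by (intro sum.cong refl) (simp add: hA_def power_sum prod.distrib)
  finally show ?thesis .
qed

end


locale approx = mehler +
  fixes F :: "('n::finite \<Rightarrow> real) \<Rightarrow> real"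
  assumes F_meas [measurable]: "F \<in> borel_measurable PN"
    and F_pm: "\<And>x. F x = -1 \<or> F x = 1"
begin

lemma F_abs [simp]: "\<bar>F x\<bar> = 1"
  using F_pm[of x] by (elim disjE) simp_all

lemma F_sq [simp]: "(F x)\<^sup>2 = 1"
  using F_pm[of x] by (elim disjE) simp_all

lemma integrable_bounded_F:
  fixes g h :: "('n \<Rightarrow> real) \<Rightarrow> real"
  assumes "integrable PN g" "(\<lambda>x. h x) \<in> borel_measurable PN" "\<And>x. \<bar>h x\<bar> \<le> \<bar>g x\<bar>"
  shows "integrable PN h"
  by (rule Bochner_Integration.integrable_bound[OF assms(1) assms(2)]) (simp add: assms(3))

lemma integrable_F_mult:
  assumes "integrable PN g" and [measurable]: "g \<in> borel_measurable PN"
  shows "integrable PN (\<lambda>x. g x * F x)"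
  by (rule integrable_bounded_F[OF assms(1)]) (simp_all add: abs_mult)

lemma integrable_F: "integrable PN F"
proof -
  interpret prob_space PN by (rule prob_space_PN)
  show ?thesis by (rule integrable_bounded_F[where g="\<lambda>_. 1"]) simp_all
qed

definition c :: "('n \<Rightarrow> nat) \<Rightarrow> real" where
  "c \<alpha> = (\<integral>x. hA \<alpha> x * F x \<partial>PN)"

lemma integrable_hA_F: "integrable PN (\<lambda>x. hA \<alpha> x * F x)"
  by (rule integrable_F_mult) (simp_all add: integrable_hA)

lemma bessel:
  assumes B: "finite B"
  shows "(\<Sum>\<alpha>\<in>B. (c \<alpha>)\<^sup>2) \<le> 1"
proof -
  interpret prob_space PN by (rule prob_space_PN)
  have pU: "prob UNIV = 1" using prob_space by simp
  let ?S = "\<lambda>x. \<Sum>\<alpha>\<in>B. c \<alpha> * hA \<alpha> x"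
  have iS2: "integrable PN (\<lambda>x. (?S x)\<^sup>2)" by (rule sum_hA_sq(1)[OF B])
  have iSF: "integrable PN (\<lambda>x. ?S x * F x)"
    unfolding sum_distrib_right
    by (intro Bochner_Integration.integrable_sum) (simp add: mult.assoc integrable_hA_F)
  have SF: "(\<integral>x. ?S x * F x \<partial>PN) = (\<Sum>\<alpha>\<in>B. (c \<alpha>)\<^sup>2)"
    unfolding sum_distrib_right
    by (subst Bochner_Integration.integral_sum) (auto simp: mult.assoc integrable_hA_F c_def[symmetric] power2_eq_square)
  have "0 \<le> (\<integral>x. (F x - ?S x)\<^sup>2 \<partial>PN)" by simp
  also have "(\<integral>x. (F x - ?S x)\<^sup>2 \<partial>PN) = (\<integral>x. 1 + ((?S x)\<^sup>2 - 2 * (?S x * F x)) \<partial>PN)"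
    by (intro Bochner_Integration.integral_cong refl) (simp add: power2_diff algebra_simps)
  also have "\<dots> = 1 + ((\<integral>x. (?S x)\<^sup>2 \<partial>PN) - 2 * (\<integral>x. ?S x * F x \<partial>PN))"
    using iS2 iSF by (simp add: pU)
  also have "\<dots> = 1 - (\<Sum>\<alpha>\<in>B. (c \<alpha>)\<^sup>2)"
    unfolding SF sum_hA_sq(2)[OF B] by simp
  finally show ?thesis by simp
qed

lemma KK_jmeas [measurable]: "(\<lambda>(x, y). KK x y) \<in> borel_measurable (PN \<Otimes>\<^sub>M PN)"
proof -
  have [measurable]: "\<And>i. (\<lambda>(x, y). k1 (x i) (y i)) \<in> borel_measurable (PN \<Otimes>\<^sub>M PN)"
  proof -
    fix i
    have "(\<lambda>p. (fst p i, snd p i)) \<in> measurable (PN \<Otimes>\<^sub>M PN) (borel \<Otimes>\<^sub>M borel)"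
      unfolding PN_def by measurable
    from measurable_comp[OF this k1_measurable]
    show "(\<lambda>(x, y). k1 (x i) (y i)) \<in> borel_measurable (PN \<Otimes>\<^sub>M PN)"
      by (simp add: case_prod_beta comp_def)
  qed
  show ?thesis unfolding KK_def by measurable
qed

definition TF :: "('n \<Rightarrow> real) \<Rightarrow> real" where
  "TF x = (\<integral>y. KK x y * F y \<partial>PN)"

lemma TF_measurable [measurable]: "TF \<in> borel_measurable PN"
proof -
  interpret prob_space PN by (rule prob_space_PN)
  have [measurable]: "(\<lambda>(x, y). KK x y * F y) \<in> borel_measurable (PN \<Otimes>\<^sub>M PN)"
    by measurable
  show ?thesis unfolding TF_def by measurable
qed

lemma TF_alt: "TF x = (\<integral>z. F (\<lambda>i. r * x i + s * z i) \<partial>PN)"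
  unfolding TF_def by (rule integral_KK) simp

lemma integrable_F_aff: "integrable PN (\<lambda>z. F (\<lambda>i. r * x i + s * z i))"
proof -
  interpret prob_space PN by (rule prob_space_PN)
  show ?thesis by (rule integrable_bounded_F[where g="\<lambda>_. 1"]) simp_all
qed

lemma integrable_KK_F: "integrable PN (\<lambda>y. KK x y * F y)"
  by (subst integrable_KK_iff) (auto simp: integrable_F_aff)

definition Box :: "nat \<Rightarrow> ('n \<Rightarrow> nat) set" where
  "Box n = PiE UNIV (\<lambda>_. {..n})"

lemma finite_Box [simp]: "finite (Box n)"
  by (simp add: Box_def finite_PiE)

definition SF :: "nat \<Rightarrow> ('n \<Rightarrow> real) \<Rightarrow> real" where
  "SF n x = (\<Sum>\<alpha>\<in>Box n. r ^ (\<Sum>i\<in>UNIV. \<alpha> i) * c \<alpha> * hA \<alpha> x)"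

lemma SF_measurable [measurable]: "SF n \<in> borel_measurable PN"
  unfolding SF_def by measurable

lemma SS_F_eq: "SS n x y * F y = (\<Sum>\<alpha>\<in>Box n. (r ^ (\<Sum>i\<in>UNIV. \<alpha> i) * hA \<alpha> x) * (hA \<alpha> y * F y))"
  unfolding SS_expand Box_def[symmetric] sum_distrib_right by (simp add: ac_simps)

lemma integrable_SS_F: "integrable PN (\<lambda>y. SS n x y * F y)"
  unfolding SS_F_eq
  by (intro Bochner_Integration.integrable_sum integrable_mult_right integrable_hA_F)

lemma integral_SS_F: "(\<integral>y. SS n x y * F y \<partial>PN) = SF n x"
proof -
  have "(\<integral>y. SS n x y * F y \<partial>PN) = (\<Sum>\<alpha>\<in>Box n. \<integral>y. (r ^ (\<Sum>i\<in>UNIV. \<alpha> i) * hA \<alpha> x) * (hA \<alpha> y * F y) \<partial>PN)"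
    unfolding SS_F_eq by (rule Bochner_Integration.integral_sum) (intro integrable_mult_right integrable_hA_F)
  also have "\<dots> = (\<Sum>\<alpha>\<in>Box n. (r ^ (\<Sum>i\<in>UNIV. \<alpha> i) * hA \<alpha> x) * c \<alpha>)"
    by (intro sum.cong refl) (simp add: c_def integrable_hA_F)
  also have "\<dots> = SF n x" by (simp add: SF_def ac_simps)
  finally show ?thesis .
qed

lemma TF_SF: "TF x - SF n x = (\<integral>y. (KK x y - SS n x y) * F y \<partial>PN)"
  unfolding TF_def integral_SS_F[symmetric] left_diff_distrib
  by (rule Bochner_Integration.integral_diff[symmetric]) (auto simp: integrable_KK_F integrable_SS_F)

lemma TF_SF_sq: "(TF x - SF n x)\<^sup>2 \<le> (\<Prod>i\<in>UNIV. Q (x i)) - (\<Prod>i\<in>UNIV. W n (x i))"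
proof -
  interpret prob_space PN by (rule prob_space_PN)
  let ?D = "\<lambda>y. KK x y - SS n x y"
  have "\<bar>TF x - SF n x\<bar> \<le> (\<integral>y. \<bar>?D y * F y\<bar> \<partial>PN)"
    unfolding TF_SF by (rule integral_abs_bound)
  also have "\<dots> = (\<integral>y. \<bar>?D y\<bar> \<partial>PN)" by (simp add: abs_mult)
  also have "\<dots> \<le> sqrt (\<integral>y. (?D y)\<^sup>2 \<partial>PN)"
    by (rule L1_le_L2(2)) (auto simp: integrable_KS_diff_sq)
  finally have "\<bar>TF x - SF n x\<bar> \<le> sqrt (\<integral>y. (?D y)\<^sup>2 \<partial>PN)" .
  then have a: "\<bar>TF x - SF n x\<bar>\<^sup>2 \<le> (sqrt (\<integral>y. (?D y)\<^sup>2 \<partial>PN))\<^sup>2"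
    by (rule power_mono) simp
  have "0 \<le> (\<integral>y. (?D y)\<^sup>2 \<partial>PN)" by simp
  with a have "(TF x - SF n x)\<^sup>2 \<le> (\<integral>y. (?D y)\<^sup>2 \<partial>PN)" by simp
  then show ?thesis by (simp add: integral_KS_diff_sq)
qed

end


context approx
begin

definition Rn :: "nat \<Rightarrow> ('n \<Rightarrow> real) \<Rightarrow> real" where
  "Rn n x = (\<Prod>i\<in>UNIV. Q (x i)) - (\<Prod>i\<in>UNIV. W n (x i))"

lemma Rn_measurable [measurable]: "Rn n \<in> borel_measurable PN"
proof -
  have [measurable]: "\<And>i. (\<lambda>x. Q (x i)) \<in> borel_measurable PN" "\<And>i. (\<lambda>x. W n (x i)) \<in> borel_measurable PN"
    unfolding PN_def by measurable
  show ?thesis unfolding Rn_def by measurable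
qed

lemma integrable_Rn: "integrable PN (Rn n)"
  unfolding Rn_def by (intro Bochner_Integration.integrable_diff integrable_prod_Q integrable_prod_W)

lemma integral_Rn: "(\<integral>x. Rn n x \<partial>PN) = (1 / (1 - r\<^sup>2)) ^ CARD('n) - C n ^ CARD('n)"
  unfolding Rn_def
  by (subst Bochner_Integration.integral_diff) (auto simp: integrable_prod_Q integrable_prod_W integral_prod_Q integral_prod_W)

lemma integrable_TF_SF_sq: "integrable PN (\<lambda>x. (TF x - SF n x)\<^sup>2)"
proof (rule integrable_bounded_F[OF integrable_Rn])
  show "(\<lambda>x. (TF x - SF n x)\<^sup>2) \<in> borel_measurable PN" by measurable
  fix x
  have "(TF x - SF n x)\<^sup>2 \<le> Rn n x" unfolding Rn_def by (rule TF_SF_sq)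
  then show "\<bar>(TF x - SF n x)\<^sup>2\<bar> \<le> \<bar>Rn n x\<bar>" by simp
qed

lemma L1_TF_SF:
  "integrable PN (\<lambda>x. TF x - SF n x)"
  "(\<integral>x. \<bar>TF x - SF n x\<bar> \<partial>PN) \<le> sqrt ((1 / (1 - r\<^sup>2)) ^ CARD('n) - C n ^ CARD('n))"
proof -
  interpret prob_space PN by (rule prob_space_PN)
  show "integrable PN (\<lambda>x. TF x - SF n x)"
    by (rule L1_le_L2(1)) (auto simp: integrable_TF_SF_sq)
  have "(\<integral>x. \<bar>TF x - SF n x\<bar> \<partial>PN) \<le> sqrt (\<integral>x. (TF x - SF n x)\<^sup>2 \<partial>PN)"
    by (rule L1_le_L2(2)) (auto simp: integrable_TF_SF_sq)
  also have "(\<integral>x. (TF x - SF n x)\<^sup>2 \<partial>PN) \<le> (\<integral>x. Rn n x \<partial>PN)"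
    by (rule integral_mono[OF integrable_TF_SF_sq integrable_Rn]) (simp add: Rn_def TF_SF_sq)
  finally show "(\<integral>x. \<bar>TF x - SF n x\<bar> \<partial>PN) \<le> sqrt ((1 / (1 - r\<^sup>2)) ^ CARD('n) - C n ^ CARD('n))"
    unfolding integral_Rn by (simp add: real_sqrt_le_iff)
qed

definition Dd :: "nat \<Rightarrow> ('n \<Rightarrow> nat) set" where
  "Dd d = {\<alpha> \<in> Box d. (\<Sum>i\<in>UNIV. \<alpha> i) \<le> d}"

definition P :: "nat \<Rightarrow> ('n \<Rightarrow> real) \<Rightarrow> real" where
  "P d x = (\<Sum>\<alpha>\<in>Dd d. r ^ (\<Sum>i\<in>UNIV. \<alpha> i) * c \<alpha> * hA \<alpha> x)"

lemma finite_Dd [simp]: "finite (Dd d)"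
  by (simp add: Dd_def)

lemma Dd_sub: "d \<le> n \<Longrightarrow> Dd d \<subseteq> Box n"
  by (fastforce simp: Dd_def Box_def PiE_iff intro: le_trans)

lemma not_Dd: "\<alpha> \<in> Box n - Dd d \<Longrightarrow> d < (\<Sum>i\<in>UNIV. \<alpha> i)"
proof (rule ccontr)
  assume a: "\<alpha> \<in> Box n - Dd d" and "\<not> d < (\<Sum>i\<in>UNIV. \<alpha> i)"
  then have le: "(\<Sum>i\<in>UNIV. \<alpha> i) \<le> d" by simp
  have "\<alpha> i \<le> (\<Sum>i\<in>UNIV. \<alpha> i)" for i by (rule member_le_sum) auto
  then have "\<And>i. \<alpha> i \<le> d" using le le_trans by blast
  then have "\<alpha> \<in> Box d" using a by (auto simp: Box_def PiE_iff)
  with le a show False by (simp add: Dd_def)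
qed

lemma SF_P:
  assumes "d \<le> n"
  shows "SF n x - P d x = (\<Sum>\<alpha>\<in>Box n - Dd d. (r ^ (\<Sum>i\<in>UNIV. \<alpha> i) * c \<alpha>) * hA \<alpha> x)"
proof -
  have "SF n x = (\<Sum>\<alpha>\<in>Box n - Dd d. (r ^ (\<Sum>i\<in>UNIV. \<alpha> i) * c \<alpha>) * hA \<alpha> x) + P d x"
    unfolding SF_def P_def by (rule sum.subset_diff[OF Dd_sub[OF assms]]) simp
  then show ?thesis by simp
qed

lemma P_measurable [measurable]: "P d \<in> borel_measurable PN"
  unfolding P_def by measurable

lemma L1_SF_P:
  assumes "d \<le> n"
  shows "integrable PN (\<lambda>x. SF n x - P d x)"
    "(\<integral>x. \<bar>SF n x - P d x\<bar> \<partial>PN) \<le> r ^ (d + 1)"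
proof -
  interpret prob_space PN by (rule prob_space_PN)
  let ?B = "Box n - Dd d"
  have fB: "finite ?B" by simp
  have i2: "integrable PN (\<lambda>x. (SF n x - P d x)\<^sup>2)"
    unfolding SF_P[OF assms] by (rule sum_hA_sq(1)[OF fB])
  show "integrable PN (\<lambda>x. SF n x - P d x)"
    by (rule L1_le_L2(1)) (auto simp: i2)
  have "(\<integral>x. \<bar>SF n x - P d x\<bar> \<partial>PN) \<le> sqrt (\<integral>x. (SF n x - P d x)\<^sup>2 \<partial>PN)"
    by (rule L1_le_L2(2)) (auto simp: i2)
  also have "(\<integral>x. (SF n x - P d x)\<^sup>2 \<partial>PN) = (\<Sum>\<alpha>\<in>?B. (r ^ (\<Sum>i\<in>UNIV. \<alpha> i) * c \<alpha>)\<^sup>2)"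
    unfolding SF_P[OF assms] by (rule sum_hA_sq(2)[OF fB])
  also have "\<dots> \<le> (\<Sum>\<alpha>\<in>?B. (r ^ (d + 1))\<^sup>2 * (c \<alpha>)\<^sup>2)"
  proof (intro sum_mono)
    fix \<alpha> assume "\<alpha> \<in> ?B"
    then have "d + 1 \<le> (\<Sum>i\<in>UNIV. \<alpha> i)" using not_Dd by fastforce
    then have "r ^ (\<Sum>i\<in>UNIV. \<alpha> i) \<le> r ^ (d + 1)"
      using r0 r1 by (intro power_decreasing) auto
    then have "(r ^ (\<Sum>i\<in>UNIV. \<alpha> i))\<^sup>2 \<le> (r ^ (d + 1))\<^sup>2"
      using r0 by (intro power_mono) auto
    then show "(r ^ (\<Sum>i\<in>UNIV. \<alpha> i) * c \<alpha>)\<^sup>2 \<le> (r ^ (d + 1))\<^sup>2 * (c \<alpha>)\<^sup>2"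
      by (simp add: power_mult_distrib mult_right_mono)
  qed
  also have "\<dots> = (r ^ (d + 1))\<^sup>2 * (\<Sum>\<alpha>\<in>?B. (c \<alpha>)\<^sup>2)"
    by (simp add: sum_distrib_left)
  also have "\<dots> \<le> (r ^ (d + 1))\<^sup>2 * 1"
    by (intro mult_left_mono bessel) auto
  finally show "(\<integral>x. \<bar>SF n x - P d x\<bar> \<partial>PN) \<le> r ^ (d + 1)"
    using r0 by (simp add: real_sqrt_le_iff)
qed

lemma L1_TF_P:
  "integrable PN (\<lambda>x. TF x - P d x)"
  "(\<integral>x. \<bar>TF x - P d x\<bar> \<partial>PN) \<le> r ^ (d + 1)"
proof -
  show iTP: "integrable PN (\<lambda>x. TF x - P d x)"
  proof -
    have e: "(\<lambda>x. TF x - P d x) = (\<lambda>x. (TF x - SF d x) + (SF d x - P d x))" by simp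
    show ?thesis unfolding e by (intro Bochner_Integration.integrable_add L1_TF_SF(1) L1_SF_P(1)) simp
  qed
  have ineq: "(\<integral>x. \<bar>TF x - P d x\<bar> \<partial>PN) \<le> sqrt ((1 / (1 - r\<^sup>2)) ^ CARD('n) - C n ^ CARD('n)) + r ^ (d + 1)"
    if "d \<le> n" for n
  proof -
    have e: "\<And>x. TF x - P d x = (TF x - SF n x) + (SF n x - P d x)" by simp
    have "(\<integral>x. \<bar>TF x - P d x\<bar> \<partial>PN) \<le> (\<integral>x. \<bar>TF x - SF n x\<bar> + \<bar>SF n x - P d x\<bar> \<partial>PN)"
      by (rule integral_mono) (auto intro!: Bochner_Integration.integrable_add L1_TF_SF(1) L1_SF_P(1)[OF that] iTP abs_triangle_ineq)
    also have "\<dots> = (\<integral>x. \<bar>TF x - SF n x\<bar> \<partial>PN) + (\<integral>x. \<bar>SF n x - P d x\<bar> \<partial>PN)"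
      by (rule Bochner_Integration.integral_add) (auto intro!: L1_TF_SF(1) L1_SF_P(1)[OF that])
    also have "\<dots> \<le> sqrt ((1 / (1 - r\<^sup>2)) ^ CARD('n) - C n ^ CARD('n)) + r ^ (d + 1)"
      by (intro add_mono L1_TF_SF(2) L1_SF_P(2)[OF that])
    finally show ?thesis .
  qed
  have lim: "(\<lambda>n. sqrt ((1 / (1 - r\<^sup>2)) ^ CARD('n) - C n ^ CARD('n)) + r ^ (d + 1))
      \<longlonglongrightarrow> sqrt ((1 / (1 - r\<^sup>2)) ^ CARD('n) - (1 / (1 - r\<^sup>2)) ^ CARD('n)) + r ^ (d + 1)"
    by (intro tendsto_intros C_tendsto)
  have "(\<integral>x. \<bar>TF x - P d x\<bar> \<partial>PN) \<le> sqrt ((1 / (1 - r\<^sup>2)) ^ CARD('n) - (1 / (1 - r\<^sup>2)) ^ CARD('n)) + r ^ (d + 1)"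
  proof (rule tendsto_le[OF _ lim tendsto_const])
    show "eventually (\<lambda>n. (\<integral>x. \<bar>TF x - P d x\<bar> \<partial>PN) \<le> sqrt ((1 / (1 - r\<^sup>2)) ^ CARD('n) - C n ^ CARD('n)) + r ^ (d + 1)) sequentially"
      unfolding eventually_sequentially using ineq by blast
  qed simp
  then show "(\<integral>x. \<bar>TF x - P d x\<bar> \<partial>PN) \<le> r ^ (d + 1)" by simp
qed

end


context approx
begin

definition Eset :: "(('n \<Rightarrow> real) \<times> ('n \<Rightarrow> real)) set" where
  "Eset = {(x, z). F x \<noteq> F (\<lambda>i. r * x i + s * z i)}"

lemma F_diff_abs: "\<bar>F x - F y\<bar> = 2 * indicator {(x, y). F x \<noteq> F y} (x, y)"
  using F_pm[of x] F_pm[of y] by (elim disjE) (simp_all add: indicator_def)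

lemma aff_pair_meas [measurable]: "(\<lambda>(x, z). F (\<lambda>i. r * x i + s * z i)) \<in> borel_measurable (PN \<Otimes>\<^sub>M PN)"
proof -
  have "(\<lambda>p. (\<lambda>i. r * fst p i + s * snd p i)) \<in> measurable (PN \<Otimes>\<^sub>M PN) PN"
    unfolding PN_def
    apply (rule measurable_PiM_single'[where f="\<lambda>i p. r * fst p i + s * snd p i"])
    by measurable
  from measurable_comp[OF this F_meas] show ?thesis by (simp add: case_prod_beta comp_def)
qed

lemma Eset_sets [measurable]: "Eset \<in> sets (PN \<Otimes>\<^sub>M PN)"
proof -
  have [measurable]: "(\<lambda>p. F (fst p)) \<in> borel_measurable (PN \<Otimes>\<^sub>M PN)" by measurable
  have [measurable]: "(\<lambda>p. F (\<lambda>i. r * fst p i + s * snd p i)) \<in> borel_measurable (PN \<Otimes>\<^sub>M PN)"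
    using aff_pair_meas by (simp add: case_prod_beta)
  have "{p \<in> space (PN \<Otimes>\<^sub>M PN). F (fst p) \<noteq> F (\<lambda>i. r * fst p i + s * snd p i)} \<in> sets (PN \<Otimes>\<^sub>M PN)"
    by measurable
  moreover have "Eset = {p \<in> space (PN \<Otimes>\<^sub>M PN). F (fst p) \<noteq> F (\<lambda>i. r * fst p i + s * snd p i)}"
    by (auto simp: Eset_def space_pair_measure)
  ultimately show ?thesis by simp
qed

lemma TF_bound: "\<bar>TF x\<bar> \<le> 1"
proof -
  interpret prob_space PN by (rule prob_space_PN)
  have pU: "prob UNIV = 1" using prob_space by simp
  have "\<bar>TF x\<bar> \<le> (\<integral>z. \<bar>F (\<lambda>i. r * x i + s * z i)\<bar> \<partial>PN)"
    unfolding TF_alt by (rule integral_abs_bound)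
  also have "\<dots> = 1" by (simp add: pU)
  finally show ?thesis .
qed

lemma integrable_F_TF: "integrable PN (\<lambda>x. F x - TF x)"
proof -
  interpret prob_space PN by (rule prob_space_PN)
  show ?thesis
  proof (rule integrable_bounded_F[where g="\<lambda>_. 2"])
    show "integrable PN (\<lambda>_. 2::real)" by simp
    show "(\<lambda>x. F x - TF x) \<in> borel_measurable PN" by measurable
    fix x
    have "\<bar>F x - TF x\<bar> \<le> \<bar>F x\<bar> + \<bar>TF x\<bar>" by (rule abs_triangle_ineq4)
    also have "\<dots> \<le> 2" using TF_bound[of x] by simp
    finally show "\<bar>F x - TF x\<bar> \<le> \<bar>2::real\<bar>" by simp
  qed
qed

lemma L1_F_TF: "(\<integral>x. \<bar>F x - TF x\<bar> \<partial>PN) \<le> 2 * measure (PN \<Otimes>\<^sub>M PN) Eset"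
proof -
  interpret prob_space PN by (rule prob_space_PN)
  interpret pair_sigma_finite PN PN
    by (intro pair_sigma_finite.intro) (rule prob_space_imp_sigma_finite, rule prob_space_PN)+
  interpret PP: prob_space "PN \<Otimes>\<^sub>M PN" by (intro prob_space_pair) (rule prob_space_PN)+
  have pU: "prob UNIV = 1" using prob_space by simp
  have iE: "integrable (PN \<Otimes>\<^sub>M PN) (\<lambda>p. 2 * indicator Eset p :: real)"
  proof (intro integrable_mult_right)
    show "integrable (PN \<Otimes>\<^sub>M PN) (indicator Eset :: _ \<Rightarrow> real)"
    proof -
      have "integrable (PN \<Otimes>\<^sub>M PN) (\<lambda>x. indicator Eset x *\<^sub>R (1::real))"
        using PP.emeasure_finite[of Eset] by (intro Bochner_Integration.integrable_indicator Eset_sets) (simp add: less_top[symmetric])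
      then show ?thesis by simp
    qed
  qed
  have pt: "\<bar>F x - TF x\<bar> \<le> (\<integral>z. (2::real) * indicator Eset (x, z) \<partial>PN)" for x
  proof -
    have "F x - TF x = (\<integral>z. F x - F (\<lambda>i. r * x i + s * z i) \<partial>PN)"
      unfolding TF_alt by (subst Bochner_Integration.integral_diff) (simp_all add: integrable_F_aff pU)
    then have "\<bar>F x - TF x\<bar> \<le> (\<integral>z. \<bar>F x - F (\<lambda>i. r * x i + s * z i)\<bar> \<partial>PN)"
      by (simp add: integral_abs_bound)
    also have "\<dots> = (\<integral>z. (2::real) * indicator Eset (x, z) \<partial>PN)"
      by (intro Bochner_Integration.integral_cong refl) (simp add: F_diff_abs Eset_def indicator_def)
    finally show ?thesis .
  qed
  have "(\<integral>x. \<bar>F x - TF x\<bar> \<partial>PN) \<le> (\<integral>x. (\<integral>z. (2::real) * indicator Eset (x, z) \<partial>PN) \<partial>PN)"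
  proof (rule integral_mono')
    show "integrable PN (\<lambda>x. \<integral>z. (2::real) * indicator Eset (x, z) \<partial>PN)"
      using integrable_fst'[OF iE] by simp
    show "\<And>x. x \<in> space PN \<Longrightarrow> \<bar>F x - TF x\<bar> \<le> (\<integral>z. (2::real) * indicator Eset (x, z) \<partial>PN)"
      using pt by blast
    show "\<And>x. x \<in> space PN \<Longrightarrow> 0 \<le> (\<integral>z. (2::real) * indicator Eset (x, z) \<partial>PN)"
      by simp
  qed
  also have "\<dots> = (\<integral>p. (2::real) * indicator Eset p \<partial>(PN \<Otimes>\<^sub>M PN))"
    using integral_fst'[OF iE] by simp
  also have "\<dots> = 2 * measure (PN \<Otimes>\<^sub>M PN) Eset"
    by (simp add: space_pair_measure)
  finally show ?thesis .
qed

end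


lemma vec_nth_measurable [measurable]: "(\<lambda>v::real^'n. v $ i) \<in> borel_measurable borel"
  by (intro borel_measurable_continuous_onI) (auto intro: continuous_intros)

lemma vec_to_PN_measurable [measurable]: "(\<lambda>v::real^'n::finite. \<lambda>i. v $ i) \<in> measurable borel PN"
  unfolding PN_def
  by (rule measurable_PiM_single'[where f="\<lambda>i v. v $ i"]) (auto simp: space_PiM)

lemma vec_lambda_eq_sum: "vec_lambda y = (\<Sum>i\<in>UNIV. y i *\<^sub>R axis i (1::real))"
  by (simp add: vec_eq_iff axis_def if_distrib cong: if_cong)

lemma vec_lambda_measurable [measurable]: "(\<lambda>y. vec_lambda y :: real^'n::finite) \<in> borel_measurable PN"
proof -
  have [measurable]: "\<And>i. (\<lambda>y::'n \<Rightarrow> real. y i) \<in> borel_measurable PN"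
    unfolding PN_def by measurable
  show ?thesis unfolding vec_lambda_eq_sum by measurable
qed

lemma axis_nth_if: "axis j (1::real) $ i = (if j = i then 1 else 0)"
  by (auto simp: axis_def)

lemma sum_basis_nth: "(\<Sum>b\<in>Basis. f b *\<^sub>R b) $ i = f (axis i 1 :: real^'n::finite)"
proof -
  have "(\<Sum>b\<in>Basis. f b *\<^sub>R b) $ i = (\<Sum>b\<in>Basis. f b * (b $ i))" by simp
  also have "\<dots> = (\<Sum>b\<in>Basis. if b = axis i 1 then f b else 0)"
    by (intro sum.cong refl) (auto simp: Basis_vec_def axis_eq_axis axis_nth_if)
  also have "\<dots> = f (axis i 1)"
  proof -
    have "axis i 1 \<in> (Basis :: (real^'n) set)" by simp
    then show ?thesis by (simp add: sum.delta')
  qed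
  finally show ?thesis .
qed

lemma Basis_vec_range: "(Basis :: (real^'n::finite) set) = range (\<lambda>i. axis i 1)"
  by (auto simp: Basis_vec_def)

lemma inj_axis1: "inj (\<lambda>i::'n::finite. axis i (1::real))"
  by (auto intro!: injI simp: axis_eq_axis)

lemma sets_std_gaussian [measurable_cong, simp]: "sets (std_gaussian :: (real^'n::finite) measure) = sets borel"
  by (simp add: std_gaussian_def)

lemma space_std_gaussian [simp]: "space (std_gaussian :: (real^'n::finite) measure) = UNIV"
  by (simp add: std_gaussian_def)

lemma distr_std_gaussian_PN: "distr (std_gaussian :: (real^'n::finite) measure) PN (\<lambda>v i. v $ i) = PN"
proof -
  interpret N: product_prob_space "\<lambda>_::'n. N1" by (rule product_prob_space_N1)
  interpret L: product_sigma_finite "\<lambda>_::real^'n. (lborel::real measure)"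
    by (intro product_sigma_finite.intro) (rule sigma_finite_lborel)
  let ?ax = "\<lambda>i::'n. axis i (1::real)"
  show ?thesis unfolding PN_def
  proof (rule N.PiM_eqI)
    show "sets (distr std_gaussian (PiM UNIV (\<lambda>_::'n. N1)) (\<lambda>v i. v $ i)) = sets (PiM UNIV (\<lambda>_::'n. N1))"
      by simp
  next
    fix A :: "'n \<Rightarrow> real set" assume "\<And>i. i \<in> UNIV \<Longrightarrow> A i \<in> sets N1"
    then have A [measurable]: "\<And>i. A i \<in> sets borel" by simp
    define H where "H i t = ennreal (std_normal_density t) * indicator (A i) t" for i t
    have Hm [measurable]: "\<And>i. H i \<in> borel_measurable borel" unfolding H_def by measurable
    have S [measurable]: "{v::real^'n. \<forall>i. v $ i \<in> A i} \<in> sets borel"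
      by measurable
    have "emeasure (distr std_gaussian (PiM UNIV (\<lambda>_::'n. N1)) (\<lambda>v i. v $ i)) (PiE UNIV A)
        = emeasure std_gaussian {v::real^'n. \<forall>i. v $ i \<in> A i}"
    proof -
      have m: "(\<lambda>v::real^'n. \<lambda>i. v $ i) \<in> measurable std_gaussian (PiM UNIV (\<lambda>_::'n. N1))"
        using vec_to_PN_measurable unfolding PN_def by (simp cong: measurable_cong_sets)
      have "PiE UNIV A \<in> sets (PiM UNIV (\<lambda>_::'n. N1))" by (intro sets_PiM_I_finite) auto
      then show ?thesis
        by (subst emeasure_distr[OF m]) (auto intro!: arg_cong[where f="emeasure std_gaussian"] simp: PiE_iff)
    qed
    also have "\<dots> = (\<integral>\<^sup>+v. (\<Prod>i\<in>UNIV. H i (v $ i)) \<partial>(lborel :: (real^'n) measure))"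
      unfolding std_gaussian_def
      by (subst emeasure_density) (auto intro!: nn_integral_cong simp: H_def prod.distrib prod_ennreal indicator_def)
    also have "\<dots> = (\<integral>\<^sup>+f. (\<Prod>i\<in>UNIV. H i (f (?ax i))) \<partial>PiM Basis (\<lambda>_. lborel))"
      by (subst lborel_eq) (simp add: nn_integral_distr sum_basis_nth del: sum_component)
    also have "\<dots> = (\<integral>\<^sup>+f. (\<Prod>b\<in>Basis. H (inv ?ax b) (f b)) \<partial>PiM Basis (\<lambda>_. lborel))"
      by (intro nn_integral_cong) (simp add: Basis_vec_range prod.reindex[OF inj_axis1] inv_f_f[OF inj_axis1])
    also have "\<dots> = (\<Prod>b\<in>Basis. \<integral>\<^sup>+t. H (inv ?ax b) t \<partial>lborel)"
      by (rule L.product_nn_integral_prod) auto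
    also have "\<dots> = (\<Prod>i\<in>UNIV. \<integral>\<^sup>+t. H i t \<partial>lborel)"
      by (simp add: Basis_vec_range prod.reindex[OF inj_axis1] inv_f_f[OF inj_axis1])
    also have "\<dots> = (\<Prod>i\<in>UNIV. emeasure N1 (A i))"
      by (intro prod.cong refl) (simp add: N1_def emeasure_density H_def)
    finally show "emeasure (distr std_gaussian (PiM UNIV (\<lambda>_::'n. N1)) (\<lambda>v i. v $ i)) (PiE UNIV A) = (\<Prod>i\<in>UNIV. emeasure N1 (A i))" .
  qed simp
qed

lemma std_gaussian_eq: "(std_gaussian :: (real^'n::finite) measure) = distr PN borel vec_lambda"
proof -
  have "distr PN borel vec_lambda = distr (distr (std_gaussian :: (real^'n) measure) PN (\<lambda>v i. v $ i)) borel vec_lambda"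
    by (simp add: distr_std_gaussian_PN)
  also have "\<dots> = distr std_gaussian borel (\<lambda>v. vec_lambda (\<lambda>i. v $ i))"
    by (subst distr_distr) (auto simp: comp_def cong: measurable_cong_sets)
  also have "\<dots> = distr std_gaussian borel (\<lambda>v. v)"
    by simp
  also have "\<dots> = std_gaussian"
    by (rule distr_id2) simp
  finally show ?thesis ..
qed


lemma degree_He: "degree (He k) \<le> k"
proof (induction k rule: He.induct)
  case 1 then show ?case by simp
next
  case 2 then show ?case by simp
next
  case (3 k)
  have "degree (pCons 0 (He (Suc k))) \<le> Suc (Suc k)"
    using 3(1) degree_pCons_le[of 0 "He (Suc k)"] by simp
  moreover have "degree (smult (real (Suc k)) (He k)) \<le> Suc (Suc k)"
    using 3(2) degree_smult_le[of "real (Suc k)" "He k"] by simp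
  ultimately show ?case
    by (simp only: He.simps) (rule order_trans[OF degree_diff_le_max], simp)
qed

lemma hn_sum: "hn k t = (\<Sum>j\<le>k. (coeff (He k) j / sqrt (fact k)) * t ^ j)"
  unfolding hn_def poly_sum_bound[OF degree_He] by (simp add: sum_divide_distrib)

definition monom :: "('n::finite \<Rightarrow> nat) \<Rightarrow> real^'n \<Rightarrow> real" where
  "monom \<beta> v = (\<Prod>i\<in>UNIV. (v $ i) ^ (\<beta> i))"

context approx
begin

definition Bset :: "('n \<Rightarrow> nat) \<Rightarrow> ('n \<Rightarrow> nat) set" where
  "Bset \<alpha> = PiE UNIV (\<lambda>i. {..\<alpha> i})"

definition Acoef :: "('n \<Rightarrow> nat) \<Rightarrow> ('n \<Rightarrow> nat) \<Rightarrow> real" where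
  "Acoef \<alpha> \<beta> = (\<Prod>i\<in>UNIV. coeff (He (\<alpha> i)) (\<beta> i) / sqrt (fact (\<alpha> i)))"

lemma hA_expand: "hA \<alpha> (\<lambda>i. v $ i) = (\<Sum>\<beta>\<in>Bset \<alpha>. Acoef \<alpha> \<beta> * monom \<beta> v)"
proof -
  have "hA \<alpha> (\<lambda>i. v $ i) = (\<Prod>i\<in>UNIV. \<Sum>j\<le>\<alpha> i. (coeff (He (\<alpha> i)) j / sqrt (fact (\<alpha> i))) * (v $ i) ^ j)"
    by (simp add: hA_def hn_sum)
  also have "\<dots> = (\<Sum>\<beta>\<in>Bset \<alpha>. \<Prod>i\<in>UNIV. (coeff (He (\<alpha> i)) (\<beta> i) / sqrt (fact (\<alpha> i))) * (v $ i) ^ (\<beta> i))"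
    unfolding Bset_def by (rule prod_sum_PiE) auto
  also have "\<dots> = (\<Sum>\<beta>\<in>Bset \<alpha>. Acoef \<alpha> \<beta> * monom \<beta> v)"
    by (simp only: Acoef_def monom_def prod.distrib)
  finally show ?thesis .
qed

lemma Bset_sub: "\<alpha> \<in> Dd d \<Longrightarrow> Bset \<alpha> \<subseteq> Dd d"
proof
  fix \<beta> assume a: "\<alpha> \<in> Dd d" and b: "\<beta> \<in> Bset \<alpha>"
  have le: "\<And>i. \<beta> i \<le> \<alpha> i" using b by (auto simp: Bset_def PiE_iff)
  have "\<And>i. \<alpha> i \<le> d" using a by (auto simp: Dd_def Box_def PiE_iff)
  then have "\<And>i. \<beta> i \<le> d" using le le_trans by blast
  moreover have "(\<Sum>i\<in>UNIV. \<beta> i) \<le> (\<Sum>i\<in>UNIV. \<alpha> i)" by (rule sum_mono) (rule le)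
  ultimately show "\<beta> \<in> Dd d" using a by (auto simp: Dd_def Box_def PiE_iff)
qed

lemma finite_Bset [simp]: "finite (Bset \<alpha>)"
  by (simp add: Bset_def finite_PiE)

lemma poly_P: "poly_deg_le d (\<lambda>v. P d (\<lambda>i. v $ i))"
proof -
  define w where "w \<alpha> = r ^ (\<Sum>i\<in>UNIV. \<alpha> i) * c \<alpha>" for \<alpha>
  define c' where "c' \<beta> = (\<Sum>\<alpha>\<in>Dd d. if \<beta> \<in> Bset \<alpha> then w \<alpha> * Acoef \<alpha> \<beta> else 0)" for \<beta>
  have eq: "P d (\<lambda>i. v $ i) = (\<Sum>\<beta>\<in>Dd d. c' \<beta> * monom \<beta> v)" for v
  proof -
    have "P d (\<lambda>i. v $ i) = (\<Sum>\<alpha>\<in>Dd d. \<Sum>\<beta>\<in>Bset \<alpha>. w \<alpha> * Acoef \<alpha> \<beta> * monom \<beta> v)"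
      unfolding P_def hA_expand w_def by (simp add: sum_distrib_left mult.assoc)
    also have "\<dots> = (\<Sum>\<alpha>\<in>Dd d. \<Sum>\<beta>\<in>Dd d. (if \<beta> \<in> Bset \<alpha> then w \<alpha> * Acoef \<alpha> \<beta> else 0) * monom \<beta> v)"
    proof (rule sum.cong[OF refl])
      fix \<alpha> assume "\<alpha> \<in> Dd d"
      then show "(\<Sum>\<beta>\<in>Bset \<alpha>. w \<alpha> * Acoef \<alpha> \<beta> * monom \<beta> v) = (\<Sum>\<beta>\<in>Dd d. (if \<beta> \<in> Bset \<alpha> then w \<alpha> * Acoef \<alpha> \<beta> else 0) * monom \<beta> v)"
        using Bset_sub by (intro sum.mono_neutral_cong_left) auto
    qed
    also have "\<dots> = (\<Sum>\<beta>\<in>Dd d. c' \<beta> * monom \<beta> v)"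
      unfolding c'_def sum_distrib_right by (rule sum.swap)
    finally show ?thesis .
  qed
  have fin: "finite (Dd d)" by simp
  have deg: "\<forall>\<alpha>\<in>Dd d. (\<Sum>i\<in>UNIV. \<alpha> i) \<le> d" by (simp add: Dd_def)
  have rep: "\<forall>x. P d (\<lambda>i. x $ i) = (\<Sum>\<beta>\<in>Dd d. c' \<beta> * (\<Prod>i\<in>UNIV. (x $ i) ^ (\<beta> i)))"
    using eq by (simp add: monom_def)
  show ?thesis unfolding poly_deg_le_def using fin deg rep by blast
qed

end


context approx
begin

lemma GNS_eq:
  fixes f :: "real^'n \<Rightarrow> real"
  assumes fm [measurable]: "f \<in> borel_measurable borel" and Fd: "\<And>y. F y = f (vec_lambda y)"
  shows "GNS (1 - r) f = measure (PN \<Otimes>\<^sub>M PN) Eset"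
proof -
  interpret PNp: prob_space "PN :: ('n \<Rightarrow> real) measure" by (rule prob_space_PN)
  have sf: "sigma_finite_measure (distr PN borel (vec_lambda :: _ \<Rightarrow> real^'n))"
    by (rule prob_space_imp_sigma_finite, rule PNp.prob_space_distr) simp
  have pm: "(std_gaussian :: (real^'n) measure) \<Otimes>\<^sub>M std_gaussian
      = distr (PN \<Otimes>\<^sub>M PN) (borel \<Otimes>\<^sub>M borel) (\<lambda>(x, y). (vec_lambda x :: real^'n, vec_lambda y :: real^'n))"
    unfolding std_gaussian_eq by (rule pair_measure_distr) (simp_all add: sf)
  define g where "g = (\<lambda>(x, z). (x, r *\<^sub>R x + s *\<^sub>R z :: real^'n))"
  define h where "h = (\<lambda>(x, y). (vec_lambda x :: real^'n, vec_lambda y :: real^'n))"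
  have gm [measurable]: "g \<in> measurable (borel \<Otimes>\<^sub>M borel) (borel \<Otimes>\<^sub>M borel)"
    unfolding g_def by measurable
  have hm [measurable]: "h \<in> measurable (PN \<Otimes>\<^sub>M PN) (borel \<Otimes>\<^sub>M borel)"
    unfolding h_def by measurable
  have "corr_gaussian_pair r = distr (std_gaussian \<Otimes>\<^sub>M std_gaussian) (borel \<Otimes>\<^sub>M borel) g"
    by (simp add: corr_gaussian_pair_def g_def s_def)
  also have "\<dots> = distr (PN \<Otimes>\<^sub>M PN) (borel \<Otimes>\<^sub>M borel) (g \<circ> h)"
    unfolding pm h_def[symmetric] by (rule distr_distr) (simp_all add: gm hm)
  finally have cg: "corr_gaussian_pair r = distr (PN \<Otimes>\<^sub>M PN) (borel \<Otimes>\<^sub>M borel) (g \<circ> h)" .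
  have S [measurable]: "{(x, y). f x \<noteq> f y} \<in> sets (borel \<Otimes>\<^sub>M borel :: ((real^'n) \<times> (real^'n)) measure)"
  proof -
    have "{p \<in> space (borel \<Otimes>\<^sub>M borel :: ((real^'n) \<times> (real^'n)) measure). f (fst p) \<noteq> f (snd p)} \<in> sets (borel \<Otimes>\<^sub>M borel)"
      by measurable
    moreover have "{p \<in> space (borel \<Otimes>\<^sub>M borel :: ((real^'n) \<times> (real^'n)) measure). f (fst p) \<noteq> f (snd p)} = {(x, y). f x \<noteq> f y}"
      by (auto simp: space_pair_measure)
    ultimately show ?thesis by simp
  qed
  have vec_aff: "r *\<^sub>R vec_lambda x + s *\<^sub>R vec_lambda z = (vec_lambda (\<lambda>i. r * x i + s * z i) :: real^'n)" for x z
    by (simp add: vec_eq_iff)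
  have pre: "(g \<circ> h) -` {(x, y). f x \<noteq> f y} \<inter> space (PN \<Otimes>\<^sub>M PN) = Eset"
    by (auto simp: g_def h_def Eset_def Fd vec_aff space_pair_measure)
  have "GNS (1 - r) f = measure (corr_gaussian_pair r) {(x, y). f x \<noteq> f y}"
    by (simp add: GNS_def)
  also have "\<dots> = measure (PN \<Otimes>\<^sub>M PN) ((g \<circ> h) -` {(x, y). f x \<noteq> f y} \<inter> space (PN \<Otimes>\<^sub>M PN))"
    unfolding cg by (rule measure_distr) (simp_all add: S)
  also have "\<dots> = measure (PN \<Otimes>\<^sub>M PN) Eset"
    unfolding pre ..
  finally show ?thesis .
qed

end

theorem proposition1p2:
  fixes f :: "real ^ 'n \<Rightarrow> real" and \<rho> :: real and d :: nat
  assumes "f \<in> borel_measurable borel"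
    and "\<And>x. f x \<in> {-1, 1}"
    and "0 \<le> \<rho>" and "\<rho> \<le> 1"
  shows "\<exists>p. poly_deg_le d p \<and>
    (\<integral>\<^sup>+ x. ennreal \<bar>f x - p x\<bar> \<partial>std_gaussian) \<le> ennreal (2 * GNS (1 - \<rho>) f + \<rho> ^ (d + 1))"
proof (cases "\<rho> = 1")
  case True
  have p0: "poly_deg_le d (\<lambda>_::real^'n. 0)"
    unfolding poly_deg_le_def by (intro exI[of _ "{}"]) simp
  interpret SG: prob_space "std_gaussian :: (real^'n) measure"
    unfolding std_gaussian_eq by (rule prob_space.prob_space_distr[OF prob_space_PN]) simp
  have "(\<integral>\<^sup>+ x. ennreal \<bar>f x - 0\<bar> \<partial>std_gaussian) = (\<integral>\<^sup>+ x. 1 \<partial>(std_gaussian :: (real^'n) measure))"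
  proof (intro nn_integral_cong)
    fix x show "ennreal \<bar>f x - 0\<bar> = 1" using assms(2)[of x] by (elim insertE) auto
  qed
  also have "\<dots> = 1" using SG.emeasure_space_1 by simp
  also have "\<dots> \<le> ennreal (2 * GNS (1 - \<rho>) f + \<rho> ^ (d + 1))"
    using True by (simp add: GNS_def)
  finally show ?thesis using p0 by blast
next
  case False
  with assms have r1: "\<rho> < 1" by simp
  note [measurable] = assms(1)
  define F where "F y = f (vec_lambda y)" for y :: "'n \<Rightarrow> real"
  have Fm: "F \<in> borel_measurable PN"
    unfolding F_def by (rule measurable_comp[OF vec_lambda_measurable assms(1), unfolded comp_def])
  interpret A: approx \<rho> F
    by unfold_locales (use assms(3) r1 Fm assms(2) in \<open>auto simp: F_def\<close>)
  let ?p = "\<lambda>v::real^'n. A.P d (\<lambda>i. v $ i)"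
  have iFP: "integrable PN (\<lambda>y. F y - A.P d y)"
  proof -
    have e: "(\<lambda>y. F y - A.P d y) = (\<lambda>y. (F y - A.TF y) + (A.TF y - A.P d y))" by simp
    show ?thesis unfolding e by (intro Bochner_Integration.integrable_add A.integrable_F_TF A.L1_TF_P(1))
  qed

  have "(\<integral>\<^sup>+ x. ennreal \<bar>f x - ?p x\<bar> \<partial>std_gaussian) = (\<integral>\<^sup>+ y. ennreal \<bar>F y - A.P d y\<bar> \<partial>PN)"
  proof -
    have pm [measurable]: "(\<lambda>x::real^'n. A.P d (\<lambda>i. x $ i)) \<in> borel_measurable borel"
      by (rule measurable_comp[OF vec_to_PN_measurable A.P_measurable, unfolded comp_def])
    show ?thesis
      unfolding std_gaussian_eq by (subst nn_integral_distr) (auto simp: F_def vec_lambda_inverse)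
  qed
  also have "\<dots> = ennreal (\<integral> y. \<bar>F y - A.P d y\<bar> \<partial>PN)"
    by (rule nn_integral_eq_integral) (simp_all add: integrable_abs[OF iFP])
  also have "\<dots> \<le> ennreal (2 * GNS (1 - \<rho>) f + \<rho> ^ (d + 1))"
  proof (rule ennreal_leI)
    have "(\<integral> y. \<bar>F y - A.P d y\<bar> \<partial>PN) \<le> (\<integral> y. \<bar>F y - A.TF y\<bar> + \<bar>A.TF y - A.P d y\<bar> \<partial>PN)"
      by (rule integral_mono)
         (auto intro!: Bochner_Integration.integrable_add A.integrable_F_TF A.L1_TF_P(1)
           integrable_abs iFP abs_triangle_ineq)
    also have "\<dots> = (\<integral> y. \<bar>F y - A.TF y\<bar> \<partial>PN) + (\<integral> y. \<bar>A.TF y - A.P d y\<bar> \<partial>PN)"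
      by (rule Bochner_Integration.integral_add) (auto intro!: A.integrable_F_TF A.L1_TF_P(1))
    also have "\<dots> \<le> 2 * measure (PN \<Otimes>\<^sub>M PN) A.Eset + \<rho> ^ (d + 1)"
      by (intro add_mono A.L1_F_TF A.L1_TF_P(2))
    also have "\<dots> = 2 * GNS (1 - \<rho>) f + \<rho> ^ (d + 1)"
      using A.GNS_eq[OF assms(1)] by (simp add: F_def)
    finally show "(\<integral> y. \<bar>F y - A.P d y\<bar> \<partial>PN) \<le> 2 * GNS (1 - \<rho>) f + \<rho> ^ (d + 1)" .
  qed
  finally show ?thesis using A.poly_P by blast
qed


end
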